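(* Let $G$ and $G'$ act on simply connected scwols $\mathcal X$ and $\mathcal X'$ with quotients $\mathcal Y=G\backslash\mathcal X$ and $\mathcal Y'=G'\backslash\mathcal X'$, let $L:\mathcal X\to\mathcal X'$ be a morphism of scwols equivariant with respect to a homomorphism $\Lambda:G\to G'$, with induced morphism $l:\mathcal Y\to\mathcal Y'$, and let $\lambda=\lambda_{C_\bullet,C'_\bullet,N_\bullet}:G(\mathcal Y)_{C_\bullet}\to G'(\mathcal Y')_{C'_\bullet}$ be the induced morphism for some choices $C_\bullet$, $C'_\bullet$, $N_\bullet$. Then $\lambda$ is a covering of complexes of groups if and only if $\Lambda$ is injective and $L$ is an isomorphism of scwols.
   Context: Scwols. A scwol $\mathcal X$ consists of a set $V(\mathcal X)$ of vertices, a set $E(\mathcal X)$ of edges, maps $i,t:E(\mathcal X)\to V(\mathcal X)$, and a composition $(a,b)\mapsto ab\in E(\mathcal X)$ defined on $E^{(2)}(\mathcal X)=\{(a,b): i(a)=t(b)\}$, such that $i(ab)=i(b)$, $t(ab)=t(a)$, $(ab)c=a(bc)$ whenever defined, and $i(a)\neq t(a)$ for all $a$. $\mathcal X$ is connected (resp. simply connected) if its geometric realization (one $k$-simplex for each sequence of $k$ composable edges) is. A morphism of scwols $l$ sends vertices to vertices and edges to edges and commutes with $i$, $t$ and composition; it is nondegenerate if for every vertex $\sigma$ it maps the edges with initial vertex $\sigma$ bijectively onto the edges with initial vertex $l(\sigma)$; an isomorphism is an invertible morphism. An action of a group $G$ on $\mathcal X$ is a homomorphism from $G$ to the automorphism group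 of $\mathcal X$ such that $g\cdot i(a)\neq t(a)$ for all $g,a$, and $g\cdot i(a)=i(a)$ implies $g\cdot a=a$. The quotient scwol $G\backslash\mathcal X$ has as vertices and edges the $G$-orbits with induced structure; a $\Lambda$-equivariant morphism $L$ ($L(g\alpha)=\Lambda(g)L(\alpha)$) induces a morphism $l$ of quotients. Complexes of groups. A complex of groups $G(\mathcal Y)=(G_\sigma,\psi_a,g_{a,b})$ over $\mathcal Y$ consists of groups $G_\sigma$, injective homomorphisms $\psi_a:G_{i(a)}\to G_{t(a)}$ and elements $g_{a,b}\in G_{t(a)}$ with $\mathrm{Ad}(g_{a,b})\psi_{ab}=\psi_a\psi_b$ and $\psi_a(g_{b,c})g_{a,bc}=g_{a,b}g_{ab,c}$. A morphism $\phi=(\phi_\sigma,\phi(a)):G(\mathcal Y)\to G'(\mathcal Y')$ over $l$ consists of homomorphisms $\phi_\sigma:G_\sigma\to G'_{l(\sigma)}$ and elements $\phi(a)\in G'_{t(l(a))}$ with $\mathrm{Ad}(\phi(a))\psi'_{l(a)}\phi_{i(a)}=\phi_{t(a)}\psi_a$ and $\phi_{t(a)}(g_{a,b})\phi(ab)=\phi(a)\psi'_{l(a)}(\phi(b))g'_{l(a),l(b)}$. A morphism $\phi$ over a nondegenerate $l$ with $\mathcal Y'$ connected is a covering if every $\phi_\sigma$ is injective and for every $a'\in E(\mathcal Y')$ and $\sigma\in V(\mathcal Y)$ with $t(a')=l(\sigma)$ the map $\coprod_{a\in l^{-1}(a'),\,t(a)=\sigma}G_\sigma/\psi_a(G_{i(a)})\to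 G'_{l(\sigma)}/\psi'_{a'}(G'_{i(a')})$ induced by $g\mapsto\phi_\sigma(g)\phi(a)$ is bijective. Associated complex of groups and induced morphism. If $G$ acts on $\mathcal X$ with quotient $\mathcal Y$, a choice $C_\bullet$ consists of a lift $\bar\sigma\in V(\mathcal X)$ of each $\sigma\in V(\mathcal Y)$ and, for each $a\in E(\mathcal Y)$, with $\bar a$ the unique lift of $a$ with $i(\bar a)=\overline{i(a)}$, an element $h_a\in G$ with $h_a\cdot t(\bar a)=\overline{t(a)}$. Then $G(\mathcal Y)_{C_\bullet}$ has $G_\sigma=\mathrm{Stab}_G(\bar\sigma)$, $\psi_a(g)=h_agh_a^{-1}$, $g_{a,b}=h_ah_bh_{ab}^{-1}$. Similarly $C'_\bullet=(\overline{\sigma'},h'_{a'})$ for $G'$ on $\mathcal X'$. A choice $N_\bullet=(k_\sigma)_{\sigma\in V(\mathcal Y)}$ consists of $k_\sigma\in G'$ with $k_\sigma\cdot L(\bar\sigma)=\overline{l(\sigma)}$; the induced morphism $\lambda_{C_\bullet,C'_\bullet,N_\bullet}$ over $l$ is $\lambda_\sigma(g)=k_\sigma\Lambda(g)k_\sigma^{-1}$, $\lambda(a)=k_{t(a)}\Lambda(h_a)k_{i(a)}^{-1}h'^{-1}_{l(a)}$. *)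

theory Defs
  imports "HOL-Algebra.Left_Coset"
begin

section \<open>Small categories without loops (scwols)\<close>

record ('v, 'e) scwol =
  sVert :: "'v set"
  sEdge :: "'e set"
  sIni  :: "'e \<Rightarrow> 'v"
  sTer  :: "'e \<Rightarrow> 'v"
  sComp :: "'e \<Rightarrow> 'e \<Rightarrow> 'e"

definition composable :: "('v, 'e) scwol \<Rightarrow> 'e \<Rightarrow> 'e \<Rightarrow> bool" where
  "composable X a b \<longleftrightarrow> a \<in> sEdge X \<and> b \<in> sEdge X \<and> sIni X a = sTer X b"

definition is_scwol :: "('v, 'e) scwol \<Rightarrow> bool" where
  "is_scwol X \<longleftrightarrow>
     (\<forall>a\<in>sEdge X. sIni X a \<in> sVert X \<and> sTer X a \<in> sVert X) \<and>
     (\<forall>a b. composable X a b \<longrightarrow>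
        sComp X a b \<in> sEdge X \<and> sIni X (sComp X a b) = sIni X b \<and> sTer X (sComp X a b) = sTer X a) \<and>
     (\<forall>a b c. composable X a b \<and> composable X b c \<longrightarrow>
        sComp X (sComp X a b) c = sComp X a (sComp X b c)) \<and>
     (\<forall>a\<in>sEdge X. sIni X a \<noteq> sTer X a)"

definition scwol_morph ::
  "('v, 'e) scwol \<Rightarrow> ('w, 'f) scwol \<Rightarrow> ('v \<Rightarrow> 'w) \<Rightarrow> ('e \<Rightarrow> 'f) \<Rightarrow> bool" where
  "scwol_morph X Y fv fe \<longleftrightarrow>
     fv ` sVert X \<subseteq> sVert Y \<and> fe ` sEdge X \<subseteq> sEdge Y \<and>
     (\<forall>a\<in>sEdge X. sIni Y (fe a) = fv (sIni X a) \<and> sTer Y (fe a) = fv (sTer X a)) \<and>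
     (\<forall>a b. composable X a b \<longrightarrow> fe (sComp X a b) = sComp Y (fe a) (fe b))"

definition scwol_nondeg ::
  "('v, 'e) scwol \<Rightarrow> ('w, 'f) scwol \<Rightarrow> ('v \<Rightarrow> 'w) \<Rightarrow> ('e \<Rightarrow> 'f) \<Rightarrow> bool" where
  "scwol_nondeg X Y fv fe \<longleftrightarrow> scwol_morph X Y fv fe \<and>
     (\<forall>\<sigma>\<in>sVert X. bij_betw fe {a \<in> sEdge X. sIni X a = \<sigma>} {a \<in> sEdge Y. sIni Y a = fv \<sigma>})"

definition scwol_iso ::
  "('v, 'e) scwol \<Rightarrow> ('w, 'f) scwol \<Rightarrow> ('v \<Rightarrow> 'w) \<Rightarrow> ('e \<Rightarrow> 'f) \<Rightarrow> bool" where
  "scwol_iso X Y fv fe \<longleftrightarrow> scwol_morph X Y fv fe \<and>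
     (\<exists>gv ge. scwol_morph Y X gv ge \<and>
        (\<forall>x\<in>sVert X. gv (fv x) = x) \<and> (\<forall>y\<in>sVert Y. fv (gv y) = y) \<and>
        (\<forall>a\<in>sEdge X. ge (fe a) = a) \<and> (\<forall>b\<in>sEdge Y. fe (ge b) = b))"

subsection \<open>Connectivity and simple connectivity (combinatorial, via edge paths
  in the geometric realization: 1-cells = edges, 2-cells = composable pairs)\<close>

text \<open>An edge path is a list of edges with orientation; True = traversed from
  initial to terminal vertex.\<close>
fun epath :: "('v, 'e) scwol \<Rightarrow> 'v \<Rightarrow> ('e \<times> bool) list \<Rightarrow> 'v \<Rightarrow> bool" where
  "epath X v [] w \<longleftrightarrow> v \<in> sVert X \<and> v = w"
| "epath X v ((e, d) # p) w \<longleftrightarrow> e \<in> sEdge X \<and>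
     v = (if d then sIni X e else sTer X e) \<and>
     epath X (if d then sTer X e else sIni X e) p w"

definition scwol_connected :: "('v, 'e) scwol \<Rightarrow> bool" where
  "scwol_connected X \<longleftrightarrow> sVert X \<noteq> {} \<and>
     (\<forall>v\<in>sVert X. \<forall>w\<in>sVert X. \<exists>p. epath X v p w)"

text \<open>Elementary homotopies of edge paths: cancelling a backtrack, and
  replacing the two sides b, a of the 2-simplex (a,b) by its third side ab.\<close>
inductive ehstep :: "('v, 'e) scwol \<Rightarrow> ('e \<times> bool) list \<Rightarrow> ('e \<times> bool) list \<Rightarrow> bool"
  for X where
  backtrack: "e \<in> sEdge X \<Longrightarrow> ehstep X (u @ [(e, d), (e, \<not> d)] @ w) (u @ w)"
| triangle: "composable X a b \<Longrightarrow>
     ehstep X (u @ [(b, True), (a, True)] @ w) (u @ [(sComp X a b, True)] @ w)"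

definition ehrel :: "('v, 'e) scwol \<Rightarrow> 'v \<Rightarrow> 'v \<Rightarrow> ('e \<times> bool) list \<Rightarrow> ('e \<times> bool) list \<Rightarrow> bool" where
  "ehrel X v w p q \<longleftrightarrow> epath X v p w \<and> epath X v q w \<and> (ehstep X p q \<or> ehstep X q p)"

definition scwol_simply_connected :: "('v, 'e) scwol \<Rightarrow> bool" where
  "scwol_simply_connected X \<longleftrightarrow> scwol_connected X \<and>
     (\<forall>v\<in>sVert X. \<forall>p. epath X v p v \<longrightarrow> (ehrel X v v)\<^sup>*\<^sup>* p [])"

definition scwol_action ::
  "'g monoid \<Rightarrow> ('v, 'e) scwol \<Rightarrow> ('g \<Rightarrow> 'v \<Rightarrow> 'v) \<Rightarrow> ('g \<Rightarrow> 'e \<Rightarrow> 'e) \<Rightarrow> bool" where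
  "scwol_action G X av ae \<longleftrightarrow> group G \<and> is_scwol X \<and>
     (\<forall>g\<in>carrier G. scwol_iso X X (av g) (ae g)) \<and>
     (\<forall>v\<in>sVert X. av \<one>\<^bsub>G\<^esub> v = v) \<and> (\<forall>a\<in>sEdge X. ae \<one>\<^bsub>G\<^esub> a = a) \<and>
     (\<forall>g\<in>carrier G. \<forall>h\<in>carrier G.
        (\<forall>v\<in>sVert X. av (g \<otimes>\<^bsub>G\<^esub> h) v = av g (av h v)) \<and>
        (\<forall>a\<in>sEdge X. ae (g \<otimes>\<^bsub>G\<^esub> h) a = ae g (ae h a))) \<and>
     (\<forall>g\<in>carrier G. \<forall>a\<in>sEdge X. av g (sIni X a) \<noteq> sTer X a) \<and>
     (\<forall>g\<in>carrier G. \<forall>a\<in>sEdge X. av g (sIni X a) = sIni X a \<longrightarrow> ae g a = a)"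

definition orbit :: "'g monoid \<Rightarrow> ('g \<Rightarrow> 'x \<Rightarrow> 'x) \<Rightarrow> 'x \<Rightarrow> 'x set" where
  "orbit G act x = {act g x | g. g \<in> carrier G}"

definition quotient_scwol ::
  "'g monoid \<Rightarrow> ('v, 'e) scwol \<Rightarrow> ('g \<Rightarrow> 'v \<Rightarrow> 'v) \<Rightarrow> ('g \<Rightarrow> 'e \<Rightarrow> 'e) \<Rightarrow> ('v set, 'e set) scwol" where
  "quotient_scwol G X av ae =
     \<lparr> sVert = orbit G av ` sVert X,
       sEdge = orbit G ae ` sEdge X,
       sIni = (\<lambda>A. sIni X ` A),
       sTer = (\<lambda>A. sTer X ` A),
       sComp = (\<lambda>A B. {sComp X a b | a b. a \<in> A \<and> b \<in> B \<and> sIni X a = sTer X b}) \<rparr>"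

definition equivariant_morph ::
  "'g monoid \<Rightarrow> ('v, 'e) scwol \<Rightarrow> ('g \<Rightarrow> 'v \<Rightarrow> 'v) \<Rightarrow> ('g \<Rightarrow> 'e \<Rightarrow> 'e) \<Rightarrow>
   'h monoid \<Rightarrow> ('w, 'f) scwol \<Rightarrow> ('h \<Rightarrow> 'w \<Rightarrow> 'w) \<Rightarrow> ('h \<Rightarrow> 'f \<Rightarrow> 'f) \<Rightarrow>
   ('g \<Rightarrow> 'h) \<Rightarrow> ('v \<Rightarrow> 'w) \<Rightarrow> ('e \<Rightarrow> 'f) \<Rightarrow> bool" where
  "equivariant_morph G X av ae G' X' av' ae' \<Lambda> Lv Le \<longleftrightarrow>
     scwol_morph X X' Lv Le \<and> \<Lambda> \<in> hom G G' \<and>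
     (\<forall>g\<in>carrier G. (\<forall>v\<in>sVert X. Lv (av g v) = av' (\<Lambda> g) (Lv v)) \<and>
                    (\<forall>a\<in>sEdge X. Le (ae g a) = ae' (\<Lambda> g) (Le a)))"

definition induced_map :: "'h monoid \<Rightarrow> ('h \<Rightarrow> 'y \<Rightarrow> 'y) \<Rightarrow> ('x \<Rightarrow> 'y) \<Rightarrow> 'x set \<Rightarrow> 'y set" where
  "induced_map G' act' L A = {act' g (L x) | g x. g \<in> carrier G' \<and> x \<in> A}"

definition complex_of_groups ::
  "('v, 'e) scwol \<Rightarrow> ('v \<Rightarrow> 'g monoid) \<Rightarrow> ('e \<Rightarrow> 'g \<Rightarrow> 'g) \<Rightarrow> ('e \<Rightarrow> 'e \<Rightarrow> 'g) \<Rightarrow> bool" where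
  "complex_of_groups Y Gs psi gab \<longleftrightarrow> is_scwol Y \<and>
     (\<forall>\<sigma>\<in>sVert Y. group (Gs \<sigma>)) \<and>
     (\<forall>a\<in>sEdge Y. psi a \<in> hom (Gs (sIni Y a)) (Gs (sTer Y a)) \<and>
                  inj_on (psi a) (carrier (Gs (sIni Y a)))) \<and>
     (\<forall>a b. composable Y a b \<longrightarrow>
        gab a b \<in> carrier (Gs (sTer Y a)) \<and>
        (\<forall>g\<in>carrier (Gs (sIni Y b)).
           gab a b \<otimes>\<^bsub>Gs (sTer Y a)\<^esub> psi (sComp Y a b) g \<otimes>\<^bsub>Gs (sTer Y a)\<^esub> inv\<^bsub>Gs (sTer Y a)\<^esub> (gab a b)
           = psi a (psi b g))) \<and>
     (\<forall>a b c. composable Y a b \<and> composable Y b c \<longrightarrow>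
        psi a (gab b c) \<otimes>\<^bsub>Gs (sTer Y a)\<^esub> gab a (sComp Y b c)
        = gab a b \<otimes>\<^bsub>Gs (sTer Y a)\<^esub> gab (sComp Y a b) c)"

definition cog_morph ::
  "('v, 'e) scwol \<Rightarrow> ('v \<Rightarrow> 'g monoid) \<Rightarrow> ('e \<Rightarrow> 'g \<Rightarrow> 'g) \<Rightarrow> ('e \<Rightarrow> 'e \<Rightarrow> 'g) \<Rightarrow>
   ('w, 'f) scwol \<Rightarrow> ('w \<Rightarrow> 'h monoid) \<Rightarrow> ('f \<Rightarrow> 'h \<Rightarrow> 'h) \<Rightarrow> ('f \<Rightarrow> 'f \<Rightarrow> 'h) \<Rightarrow>
   ('v \<Rightarrow> 'w) \<Rightarrow> ('e \<Rightarrow> 'f) \<Rightarrow> ('v \<Rightarrow> 'g \<Rightarrow> 'h) \<Rightarrow> ('e \<Rightarrow> 'h) \<Rightarrow> bool" where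
  "cog_morph Y Gs psi gab Y' Gs' psi' gab' lv led phv phe \<longleftrightarrow>
     complex_of_groups Y Gs psi gab \<and> complex_of_groups Y' Gs' psi' gab' \<and>
     scwol_morph Y Y' lv led \<and>
     (\<forall>\<sigma>\<in>sVert Y. phv \<sigma> \<in> hom (Gs \<sigma>) (Gs' (lv \<sigma>))) \<and>
     (\<forall>a\<in>sEdge Y. phe a \<in> carrier (Gs' (lv (sTer Y a))) \<and>
        (\<forall>g\<in>carrier (Gs (sIni Y a)).
           phe a \<otimes>\<^bsub>Gs' (lv (sTer Y a))\<^esub> psi' (led a) (phv (sIni Y a) g)
             \<otimes>\<^bsub>Gs' (lv (sTer Y a))\<^esub> inv\<^bsub>Gs' (lv (sTer Y a))\<^esub> (phe a)
           = phv (sTer Y a) (psi a g))) \<and>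
     (\<forall>a b. composable Y a b \<longrightarrow>
        phv (sTer Y a) (gab a b) \<otimes>\<^bsub>Gs' (lv (sTer Y a))\<^esub> phe (sComp Y a b)
        = phe a \<otimes>\<^bsub>Gs' (lv (sTer Y a))\<^esub> psi' (led a) (phe b)
            \<otimes>\<^bsub>Gs' (lv (sTer Y a))\<^esub> gab' (led a) (led b))"

text \<open>The map from the disjoint union of the coset spaces
  \<open>G_\<sigma>/\<psi>_a(G_{i(a)})\<close> (pairs (a, coset)) to \<open>G'_{l(\<sigma>)}/\<psi>'_{a'}(G'_{i(a')})\<close>
  induced by \<open>g \<mapsto> \<phi>_\<sigma>(g)\<phi>(a)\<close> sends the pair (a, C) to the set
  \<open>\<phi>_\<sigma>(C) \<phi>(a) \<psi>'_{a'}(G'_{i(a')})\<close>.\<close>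
definition cog_covering ::
  "('v, 'e) scwol \<Rightarrow> ('v \<Rightarrow> 'g monoid) \<Rightarrow> ('e \<Rightarrow> 'g \<Rightarrow> 'g) \<Rightarrow> ('e \<Rightarrow> 'e \<Rightarrow> 'g) \<Rightarrow>
   ('w, 'f) scwol \<Rightarrow> ('w \<Rightarrow> 'h monoid) \<Rightarrow> ('f \<Rightarrow> 'h \<Rightarrow> 'h) \<Rightarrow> ('f \<Rightarrow> 'f \<Rightarrow> 'h) \<Rightarrow>
   ('v \<Rightarrow> 'w) \<Rightarrow> ('e \<Rightarrow> 'f) \<Rightarrow> ('v \<Rightarrow> 'g \<Rightarrow> 'h) \<Rightarrow> ('e \<Rightarrow> 'h) \<Rightarrow> bool" where
  "cog_covering Y Gs psi gab Y' Gs' psi' gab' lv led phv phe \<longleftrightarrow>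
     cog_morph Y Gs psi gab Y' Gs' psi' gab' lv led phv phe \<and>
     scwol_nondeg Y Y' lv led \<and> scwol_connected Y' \<and>
     (\<forall>\<sigma>\<in>sVert Y. inj_on (phv \<sigma>) (carrier (Gs \<sigma>))) \<and>
     (\<forall>a'\<in>sEdge Y'. \<forall>\<sigma>\<in>sVert Y. sTer Y' a' = lv \<sigma> \<longrightarrow>
        bij_betw
          (\<lambda>(a, C). (phv \<sigma> ` C) <#>\<^bsub>Gs' (lv \<sigma>)\<^esub> {phe a}
                     <#>\<^bsub>Gs' (lv \<sigma>)\<^esub> (psi' a' ` carrier (Gs' (sIni Y' a'))))
          {(a, C). a \<in> sEdge Y \<and> led a = a' \<and> sTer Y a = \<sigma> \<and>
                   C \<in> lcosets\<^bsub>Gs \<sigma>\<^esub> (psi a ` carrier (Gs (sIni Y a)))}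
          (lcosets\<^bsub>Gs' (lv \<sigma>)\<^esub> (psi' a' ` carrier (Gs' (sIni Y' a')))))"

text \<open>The unique lift of an edge \<open>a\<close> of the quotient with initial vertex \<open>bar (i(a))\<close>.\<close>
definition lift_edge :: "('v, 'e) scwol \<Rightarrow> ('v set \<Rightarrow> 'v) \<Rightarrow> 'e set \<Rightarrow> 'e" where
  "lift_edge X bar a = (THE x. x \<in> a \<and> sIni X x = bar (sIni X ` a))"

definition valid_choice ::
  "'g monoid \<Rightarrow> ('v, 'e) scwol \<Rightarrow> ('g \<Rightarrow> 'v \<Rightarrow> 'v) \<Rightarrow> ('g \<Rightarrow> 'e \<Rightarrow> 'e) \<Rightarrow>
   ('v set \<Rightarrow> 'v) \<Rightarrow> ('e set \<Rightarrow> 'g) \<Rightarrow> bool" where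
  "valid_choice G X av ae bar h \<longleftrightarrow>
     (let Y = quotient_scwol G X av ae in
       (\<forall>\<sigma>\<in>sVert Y. bar \<sigma> \<in> \<sigma>) \<and>
       (\<forall>a\<in>sEdge Y. h a \<in> carrier G \<and>
          av (h a) (sTer X (lift_edge X bar a)) = bar (sTer Y a)))"

definition stab :: "'g monoid \<Rightarrow> ('g \<Rightarrow> 'v \<Rightarrow> 'v) \<Rightarrow> 'v \<Rightarrow> 'g set" where
  "stab G av x = {g \<in> carrier G. av g x = x}"

definition assoc_groups :: "'g monoid \<Rightarrow> ('g \<Rightarrow> 'v \<Rightarrow> 'v) \<Rightarrow> ('v set \<Rightarrow> 'v) \<Rightarrow> 'v set \<Rightarrow> 'g monoid" where
  "assoc_groups G av bar \<sigma> = G\<lparr>carrier := stab G av (bar \<sigma>)\<rparr>"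

definition assoc_psi :: "'g monoid \<Rightarrow> ('e set \<Rightarrow> 'g) \<Rightarrow> 'e set \<Rightarrow> 'g \<Rightarrow> 'g" where
  "assoc_psi G h a g = h a \<otimes>\<^bsub>G\<^esub> g \<otimes>\<^bsub>G\<^esub> inv\<^bsub>G\<^esub> (h a)"

definition assoc_twist ::
  "'g monoid \<Rightarrow> ('v, 'e) scwol \<Rightarrow> ('g \<Rightarrow> 'v \<Rightarrow> 'v) \<Rightarrow> ('g \<Rightarrow> 'e \<Rightarrow> 'e) \<Rightarrow> ('e set \<Rightarrow> 'g) \<Rightarrow>
   'e set \<Rightarrow> 'e set \<Rightarrow> 'g" where
  "assoc_twist G X av ae h a b =
     h a \<otimes>\<^bsub>G\<^esub> h b \<otimes>\<^bsub>G\<^esub> inv\<^bsub>G\<^esub> (h (sComp (quotient_scwol G X av ae) a b))"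

definition induced_cog_v :: "'h monoid \<Rightarrow> ('g \<Rightarrow> 'h) \<Rightarrow> ('v set \<Rightarrow> 'h) \<Rightarrow> 'v set \<Rightarrow> 'g \<Rightarrow> 'h" where
  "induced_cog_v G' \<Lambda> k \<sigma> g = k \<sigma> \<otimes>\<^bsub>G'\<^esub> \<Lambda> g \<otimes>\<^bsub>G'\<^esub> inv\<^bsub>G'\<^esub> (k \<sigma>)"

definition induced_cog_e ::
  "'h monoid \<Rightarrow> ('v, 'e) scwol \<Rightarrow> ('g \<Rightarrow> 'h) \<Rightarrow> ('e set \<Rightarrow> 'g) \<Rightarrow> ('f set \<Rightarrow> 'h) \<Rightarrow>
   ('e set \<Rightarrow> 'f set) \<Rightarrow> ('v set \<Rightarrow> 'h) \<Rightarrow> 'e set \<Rightarrow> 'h" where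
  "induced_cog_e G' X \<Lambda> h h' led k a =
     k (sTer X ` a) \<otimes>\<^bsub>G'\<^esub> \<Lambda> (h a) \<otimes>\<^bsub>G'\<^esub> inv\<^bsub>G'\<^esub> (k (sIni X ` a)) \<otimes>\<^bsub>G'\<^esub> inv\<^bsub>G'\<^esub> (h' (led a))"

end

theory Submission
  imports Defs
begin


lemma epath_Vstart: "is_scwol X \<Longrightarrow> epath X v p w \<Longrightarrow> v \<in> sVert X"
  by (cases p) (auto simp: is_scwol_def)

lemma epath_Vend: "epath X v p w \<Longrightarrow> w \<in> sVert X"
  by (induction p arbitrary: v) auto

lemma epath_append:
  "is_scwol X \<Longrightarrow> epath X v (p @ q) w \<longleftrightarrow> (\<exists>u. epath X v p u \<and> epath X u q w)"
proof (induction p arbitrary: v)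
  case Nil then show ?case using epath_Vstart by fastforce
next
  case (Cons x p) then show ?case by (cases x) auto
qed

locale sact =
  fixes G :: "'g monoid" and X :: "('v, 'e) scwol"
    and av :: "'g \<Rightarrow> 'v \<Rightarrow> 'v" and ae :: "'g \<Rightarrow> 'e \<Rightarrow> 'e"
  assumes act: "scwol_action G X av ae"
begin

lemma grp: "group G" using act by (simp add: scwol_action_def)
lemma scw: "is_scwol X" using act by (simp add: scwol_action_def)

sublocale G: group G by (rule grp)

lemma iniV: "a \<in> sEdge X \<Longrightarrow> sIni X a \<in> sVert X"
  using scw by (simp add: is_scwol_def)
lemma terV: "a \<in> sEdge X \<Longrightarrow> sTer X a \<in> sVert X"
  using scw by (simp add: is_scwol_def)
lemma compE: "composable X a b \<Longrightarrow> sComp X a b \<in> sEdge X"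
  using scw by (simp add: is_scwol_def)
lemma comp_ini: "composable X a b \<Longrightarrow> sIni X (sComp X a b) = sIni X b"
  using scw by (simp add: is_scwol_def)
lemma comp_ter: "composable X a b \<Longrightarrow> sTer X (sComp X a b) = sTer X a"
  using scw by (simp add: is_scwol_def)
lemma noloop: "a \<in> sEdge X \<Longrightarrow> sIni X a \<noteq> sTer X a"
  using scw by (simp add: is_scwol_def)

lemma morph: "g \<in> carrier G \<Longrightarrow> scwol_morph X X (av g) (ae g)"
  using act by (simp add: scwol_action_def scwol_iso_def)

lemma av_V: "g \<in> carrier G \<Longrightarrow> v \<in> sVert X \<Longrightarrow> av g v \<in> sVert X"
  using morph[of g] by (auto simp: scwol_morph_def)
lemma ae_E: "g \<in> carrier G \<Longrightarrow> a \<in> sEdge X \<Longrightarrow> ae g a \<in> sEdge X"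
  using morph[of g] by (auto simp: scwol_morph_def)
lemma ae_ini: "g \<in> carrier G \<Longrightarrow> a \<in> sEdge X \<Longrightarrow> sIni X (ae g a) = av g (sIni X a)"
  using morph[of g] by (auto simp: scwol_morph_def)
lemma ae_ter: "g \<in> carrier G \<Longrightarrow> a \<in> sEdge X \<Longrightarrow> sTer X (ae g a) = av g (sTer X a)"
  using morph[of g] by (auto simp: scwol_morph_def)
lemma ae_comp: "g \<in> carrier G \<Longrightarrow> composable X a b \<Longrightarrow> ae g (sComp X a b) = sComp X (ae g a) (ae g b)"
  using morph[of g] by (auto simp: scwol_morph_def)
lemma av_one: "v \<in> sVert X \<Longrightarrow> av \<one>\<^bsub>G\<^esub> v = v"
  using act by (simp add: scwol_action_def)
lemma ae_one: "a \<in> sEdge X \<Longrightarrow> ae \<one>\<^bsub>G\<^esub> a = a"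
  using act by (simp add: scwol_action_def)
lemma av_mult: "g \<in> carrier G \<Longrightarrow> h \<in> carrier G \<Longrightarrow> v \<in> sVert X \<Longrightarrow> av (g \<otimes>\<^bsub>G\<^esub> h) v = av g (av h v)"
  using act by (simp add: scwol_action_def)
lemma ae_mult: "g \<in> carrier G \<Longrightarrow> h \<in> carrier G \<Longrightarrow> a \<in> sEdge X \<Longrightarrow> ae (g \<otimes>\<^bsub>G\<^esub> h) a = ae g (ae h a)"
  using act by (simp add: scwol_action_def)
lemma no_inv: "g \<in> carrier G \<Longrightarrow> a \<in> sEdge X \<Longrightarrow> av g (sIni X a) \<noteq> sTer X a"
  using act by (simp add: scwol_action_def)
lemma fix_edge: "g \<in> carrier G \<Longrightarrow> a \<in> sEdge X \<Longrightarrow> av g (sIni X a) = sIni X a \<Longrightarrow> ae g a = a"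
  using act by (simp add: scwol_action_def)

lemma av_inv1: "g \<in> carrier G \<Longrightarrow> v \<in> sVert X \<Longrightarrow> av (inv\<^bsub>G\<^esub> g) (av g v) = v"
  by (metis G.inv_closed G.l_inv av_mult av_one)
lemma av_inv2: "g \<in> carrier G \<Longrightarrow> v \<in> sVert X \<Longrightarrow> av g (av (inv\<^bsub>G\<^esub> g) v) = v"
  by (metis G.inv_closed G.r_inv av_mult av_one)
lemma ae_inv1: "g \<in> carrier G \<Longrightarrow> a \<in> sEdge X \<Longrightarrow> ae (inv\<^bsub>G\<^esub> g) (ae g a) = a"
  by (metis G.inv_closed G.l_inv ae_mult ae_one)
lemma ae_inv2: "g \<in> carrier G \<Longrightarrow> a \<in> sEdge X \<Longrightarrow> ae g (ae (inv\<^bsub>G\<^esub> g) a) = a"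
  by (metis G.inv_closed G.r_inv ae_mult ae_one)

lemma av_inj: "g \<in> carrier G \<Longrightarrow> v \<in> sVert X \<Longrightarrow> w \<in> sVert X \<Longrightarrow> av g v = av g w \<longleftrightarrow> v = w"
  by (metis av_inv1)
lemma ae_inj: "g \<in> carrier G \<Longrightarrow> a \<in> sEdge X \<Longrightarrow> b \<in> sEdge X \<Longrightarrow> ae g a = ae g b \<longleftrightarrow> a = b"
  by (metis ae_inv1)

lemma composable_act: "g \<in> carrier G \<Longrightarrow> composable X a b \<Longrightarrow> composable X (ae g a) (ae g b)"
  by (auto simp: composable_def ae_E ae_ini ae_ter)

lemma orbit_memI: "g \<in> carrier G \<Longrightarrow> y = act g x \<Longrightarrow> y \<in> orbit G act x"
  by (auto simp: orbit_def)
lemma orbit_memE: "y \<in> orbit G act x \<Longrightarrow> (\<And>g. g \<in> carrier G \<Longrightarrow> y = act g x \<Longrightarrow> P) \<Longrightarrow> P"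
  by (auto simp: orbit_def)

lemma orbitV_self: "v \<in> sVert X \<Longrightarrow> v \<in> orbit G av v"
  by (metis G.one_closed av_one orbit_memI)
lemma orbitE_self: "a \<in> sEdge X \<Longrightarrow> a \<in> orbit G ae a"
  by (metis G.one_closed ae_one orbit_memI)

lemma orbitV_eq: assumes "v \<in> sVert X" "w \<in> orbit G av v" shows "orbit G av w = orbit G av v"
proof -
  obtain g where g: "g \<in> carrier G" "w = av g v" using assms(2) by (rule orbit_memE)
  show ?thesis
  proof
    show "orbit G av w \<subseteq> orbit G av v"
    proof
      fix u assume "u \<in> orbit G av w"
      then obtain g' where "g' \<in> carrier G" "u = av g' w" by (rule orbit_memE)
      then show "u \<in> orbit G av v" using g assms by (intro orbit_memI[of "g' \<otimes>\<^bsub>G\<^esub> g"]) (simp_all add: av_mult)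
    qed
    show "orbit G av v \<subseteq> orbit G av w"
    proof
      fix u assume "u \<in> orbit G av v"
      then obtain g' where g': "g' \<in> carrier G" "u = av g' v" by (rule orbit_memE)
      have "u = av (g' \<otimes>\<^bsub>G\<^esub> inv\<^bsub>G\<^esub> g) w" using g g' assms by (simp add: av_mult av_inv1 av_V)
      then show "u \<in> orbit G av w" using g g' by (intro orbit_memI) auto
    qed
  qed
qed

lemma orbitE_eq: assumes "a \<in> sEdge X" "b \<in> orbit G ae a" shows "orbit G ae b = orbit G ae a"
proof -
  obtain g where g: "g \<in> carrier G" "b = ae g a" using assms(2) by (rule orbit_memE)
  show ?thesis
  proof
    show "orbit G ae b \<subseteq> orbit G ae a"
    proof
      fix u assume "u \<in> orbit G ae b"
      then obtain g' where "g' \<in> carrier G" "u = ae g' b" by (rule orbit_memE)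
      then show "u \<in> orbit G ae a" using g assms by (intro orbit_memI[of "g' \<otimes>\<^bsub>G\<^esub> g"]) (simp_all add: ae_mult)
    qed
    show "orbit G ae a \<subseteq> orbit G ae b"
    proof
      fix u assume "u \<in> orbit G ae a"
      then obtain g' where g': "g' \<in> carrier G" "u = ae g' a" by (rule orbit_memE)
      have "u = ae (g' \<otimes>\<^bsub>G\<^esub> inv\<^bsub>G\<^esub> g) b" using g g' assms by (simp add: ae_mult ae_inv1 ae_E)
      then show "u \<in> orbit G ae b" using g g' by (intro orbit_memI) auto
    qed
  qed
qed

lemma orbitV_eq_iff: "v \<in> sVert X \<Longrightarrow> w \<in> sVert X \<Longrightarrow> orbit G av v = orbit G av w \<longleftrightarrow> w \<in> orbit G av v"
  using orbitV_eq[of v w] orbitV_self[of w] by auto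
lemma orbitE_eq_iff: "a \<in> sEdge X \<Longrightarrow> b \<in> sEdge X \<Longrightarrow> orbit G ae a = orbit G ae b \<longleftrightarrow> b \<in> orbit G ae a"
  using orbitE_eq[of a b] orbitE_self[of b] by auto

lemma orbitV_sub: "v \<in> sVert X \<Longrightarrow> orbit G av v \<subseteq> sVert X"
  by (auto simp: orbit_def av_V)
lemma orbitE_sub: "a \<in> sEdge X \<Longrightarrow> orbit G ae a \<subseteq> sEdge X"
  by (auto simp: orbit_def ae_E)

lemma ini_orbit: "a \<in> sEdge X \<Longrightarrow> sIni X ` orbit G ae a = orbit G av (sIni X a)"
  apply (auto simp: orbit_def ae_ini)
  subgoal for g by (rule image_eqI[of _ _ "ae g a"]) (auto simp: ae_ini)
  done
lemma ter_orbit: "a \<in> sEdge X \<Longrightarrow> sTer X ` orbit G ae a = orbit G av (sTer X a)"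
  apply (auto simp: orbit_def ae_ter)
  subgoal for g by (rule image_eqI[of _ _ "ae g a"]) (auto simp: ae_ter)
  done

abbreviation "Y \<equiv> quotient_scwol G X av ae"

lemma Y_simps: "sVert Y = orbit G av ` sVert X" "sEdge Y = orbit G ae ` sEdge X"
  "sIni Y A = sIni X ` A" "sTer Y A = sTer X ` A"
  "sComp Y A B = {sComp X a b | a b. a \<in> A \<and> b \<in> B \<and> sIni X a = sTer X b}"
  by (simp_all add: quotient_scwol_def)

lemma comp_orbit: assumes "composable X a b"
  shows "sComp Y (orbit G ae a) (orbit G ae b) = orbit G ae (sComp X a b)"
proof
  show "orbit G ae (sComp X a b) \<subseteq> sComp Y (orbit G ae a) (orbit G ae b)"
  proof
    fix c assume "c \<in> orbit G ae (sComp X a b)"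
    then obtain g where g: "g \<in> carrier G" "c = ae g (sComp X a b)" by (rule orbit_memE)
    then have "c = sComp X (ae g a) (ae g b)" using ae_comp assms by simp
    moreover have "sIni X (ae g a) = sTer X (ae g b)" using composable_act[OF g(1) assms] by (simp add: composable_def)
    moreover have "ae g a \<in> orbit G ae a" "ae g b \<in> orbit G ae b"
      using g by (auto intro: orbit_memI)
    ultimately show "c \<in> sComp Y (orbit G ae a) (orbit G ae b)"
      unfolding Y_simps by blast
  qed
  show "sComp Y (orbit G ae a) (orbit G ae b) \<subseteq> orbit G ae (sComp X a b)"
  proof
    fix c assume "c \<in> sComp Y (orbit G ae a) (orbit G ae b)"
    then obtain a2 b2 where c: "c = sComp X a2 b2" "a2 \<in> orbit G ae a" "b2 \<in> orbit G ae b" "sIni X a2 = sTer X b2"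
      by (auto simp: Y_simps)
    obtain g where g: "g \<in> carrier G" "a2 = ae g a" using c(2) by (rule orbit_memE)
    obtain g' where g': "g' \<in> carrier G" "b2 = ae g' b" using c(3) by (rule orbit_memE)
    have aE: "a \<in> sEdge X" "b \<in> sEdge X" and ab: "sIni X a = sTer X b" using assms by (auto simp: composable_def)
    have "av g (sIni X a) = av g' (sIni X a)" using c(4) g g' aE ab by (simp add: ae_ini ae_ter)
    then have "av (inv\<^bsub>G\<^esub> g' \<otimes>\<^bsub>G\<^esub> g) (sIni X a) = sIni X a"
      using g g' aE by (simp add: av_mult av_inv1 iniV)
    then have "ae (inv\<^bsub>G\<^esub> g' \<otimes>\<^bsub>G\<^esub> g) a = a" using g g' aE by (intro fix_edge) auto
    moreover have e: "g' \<otimes>\<^bsub>G\<^esub> (inv\<^bsub>G\<^esub> g' \<otimes>\<^bsub>G\<^esub> g) = g" using g g' by (simp add: G.m_assoc[symmetric])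
    moreover have "ae (g' \<otimes>\<^bsub>G\<^esub> (inv\<^bsub>G\<^esub> g' \<otimes>\<^bsub>G\<^esub> g)) a = ae g' (ae (inv\<^bsub>G\<^esub> g' \<otimes>\<^bsub>G\<^esub> g) a)"
      using g g' aE by (intro ae_mult) auto
    ultimately have "ae g a = ae g' a" by simp
    then have "c = ae g' (sComp X a b)" using c(1) g(2) g'(2) ae_comp[OF g'(1) assms] by simp
    then show "c \<in> orbit G ae (sComp X a b)" by (rule orbit_memI[OF g'(1)])
  qed
qed

end


context sact begin

lemma cancel1: "x \<in> carrier G \<Longrightarrow> y \<in> carrier G \<Longrightarrow> x \<otimes>\<^bsub>G\<^esub> (inv\<^bsub>G\<^esub> x \<otimes>\<^bsub>G\<^esub> y) = y"
  by (simp add: G.m_assoc[symmetric])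
lemma cancel2: "x \<in> carrier G \<Longrightarrow> y \<in> carrier G \<Longrightarrow> inv\<^bsub>G\<^esub> x \<otimes>\<^bsub>G\<^esub> (x \<otimes>\<^bsub>G\<^esub> y) = y"
  by (simp add: G.m_assoc[symmetric])

lemmas gsimps = G.m_assoc G.inv_mult_group cancel1 cancel2 G.m_closed G.inv_closed G.r_inv G.l_inv G.r_one G.l_one G.inv_inv

lemma av_mult3: "g \<in> carrier G \<Longrightarrow> h \<in> carrier G \<Longrightarrow> v \<in> sVert X \<Longrightarrow> av (g \<otimes>\<^bsub>G\<^esub> h) v = av g (av h v)"
  by (rule av_mult)

lemma av_inv_eq: "g \<in> carrier G \<Longrightarrow> v \<in> sVert X \<Longrightarrow> w \<in> sVert X \<Longrightarrow> av (inv\<^bsub>G\<^esub> g) w = v \<longleftrightarrow> w = av g v"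
  by (auto simp: av_inv1 av_inv2)

lemma ae_inv_eq: "g \<in> carrier G \<Longrightarrow> a \<in> sEdge X \<Longrightarrow> b \<in> sEdge X \<Longrightarrow> ae (inv\<^bsub>G\<^esub> g) b = a \<longleftrightarrow> b = ae g a"
  by (auto simp: ae_inv1 ae_inv2)

lemma same_ini: assumes "a0 \<in> sEdge X" "x1 \<in> orbit G ae a0" "x2 \<in> orbit G ae a0" "sIni X x1 = sIni X x2"
  shows "x1 = x2"
proof -
  obtain g1 where g1: "g1 \<in> carrier G" "x1 = ae g1 a0" using assms(2) by (rule orbit_memE)
  obtain g2 where g2: "g2 \<in> carrier G" "x2 = ae g2 a0" using assms(3) by (rule orbit_memE)
  have x1E: "x1 \<in> sEdge X" using g1 assms ae_E by simp
  let ?k = "g2 \<otimes>\<^bsub>G\<^esub> inv\<^bsub>G\<^esub> g1"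
  have k: "?k \<in> carrier G" using g1 g2 by simp
  have "ae ?k x1 = x2" using g1 g2 assms(1) by (simp add: ae_mult ae_inv1 ae_E)
  moreover have "av ?k (sIni X x1) = sIni X (ae ?k x1)" using k x1E by (simp add: ae_ini)
  ultimately have "av ?k (sIni X x1) = sIni X x1" using assms(4) by simp
  moreover note \<open>ae ?k x1 = x2\<close>
  ultimately show ?thesis using fix_edge[OF k x1E] by simp
qed

lemma YV_rep: "A \<in> sVert Y \<Longrightarrow> (\<And>x. x \<in> sVert X \<Longrightarrow> A = orbit G av x \<Longrightarrow> P) \<Longrightarrow> P"
  by (auto simp: Y_simps)
lemma YE_rep: "A \<in> sEdge Y \<Longrightarrow> (\<And>x. x \<in> sEdge X \<Longrightarrow> A = orbit G ae x \<Longrightarrow> P) \<Longrightarrow> P"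
  by (auto simp: Y_simps)

lemma Yini: "a \<in> sEdge X \<Longrightarrow> sIni Y (orbit G ae a) = orbit G av (sIni X a)"
  by (simp add: Y_simps ini_orbit)
lemma Yter: "a \<in> sEdge X \<Longrightarrow> sTer Y (orbit G ae a) = orbit G av (sTer X a)"
  by (simp add: Y_simps ter_orbit)

lemma orbitV_in: "x \<in> sVert X \<Longrightarrow> orbit G av x \<in> sVert Y" by (simp add: Y_simps)
lemma orbitE_in: "x \<in> sEdge X \<Longrightarrow> orbit G ae x \<in> sEdge Y" by (simp add: Y_simps)

lemma compY_left: assumes "composable Y A (orbit G ae b)" "b \<in> sEdge X"
  obtains a where "composable X a b" "A = orbit G ae a"
proof -
  obtain a0 where a0: "a0 \<in> sEdge X" "A = orbit G ae a0" using assms(1) by (auto simp: composable_def elim: YE_rep)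
  have "orbit G av (sIni X a0) = orbit G av (sTer X b)"
    using assms a0 by (simp add: composable_def Yini Yter)
  then have "sTer X b \<in> orbit G av (sIni X a0)"
    using orbitV_eq_iff a0 assms(2) iniV terV by blast
  then obtain g where g: "g \<in> carrier G" "sTer X b = av g (sIni X a0)" by (rule orbit_memE)
  have "composable X (ae g a0) b" using g a0 assms by (simp add: composable_def ae_E ae_ini)
  moreover have "A = orbit G ae (ae g a0)" using g a0 orbitE_eq orbit_memI by metis
  ultimately show ?thesis using that by blast
qed

lemma compY_right: assumes "composable Y (orbit G ae a) C" "a \<in> sEdge X"
  obtains c where "composable X a c" "C = orbit G ae c"
proof -
  obtain c0 where c0: "c0 \<in> sEdge X" "C = orbit G ae c0" using assms(1) by (auto simp: composable_def elim: YE_rep)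
  have "orbit G av (sTer X c0) = orbit G av (sIni X a)"
    using assms c0 by (simp add: composable_def Yini Yter)
  then have "sIni X a \<in> orbit G av (sTer X c0)"
    using orbitV_eq_iff c0 assms(2) iniV terV by blast
  then obtain g where g: "g \<in> carrier G" "sIni X a = av g (sTer X c0)" by (rule orbit_memE)
  have "composable X a (ae g c0)" using g c0 assms by (simp add: composable_def ae_E ae_ter)
  moreover have "C = orbit G ae (ae g c0)" using g c0 orbitE_eq orbit_memI by metis
  ultimately show ?thesis using that by blast
qed

lemma compY_rep: assumes "composable Y A B"
  obtains a b where "composable X a b" "A = orbit G ae a" "B = orbit G ae b"
proof -
  obtain b where b: "b \<in> sEdge X" "B = orbit G ae b" using assms by (auto simp: composable_def elim: YE_rep)
  then show ?thesis using compY_left assms that by metis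
qed

lemma composable_orbit: "composable X a b \<Longrightarrow> composable Y (orbit G ae a) (orbit G ae b)"
  by (auto simp: composable_def Yini Yter orbitE_in)

lemma Y_scwol: "is_scwol Y"
proof -
  have 1: "\<forall>A\<in>sEdge Y. sIni Y A \<in> sVert Y \<and> sTer Y A \<in> sVert Y"
    by (auto simp: Yini Yter orbitV_in iniV terV elim!: YE_rep)
  have 2: "sComp Y A B \<in> sEdge Y \<and> sIni Y (sComp Y A B) = sIni Y B \<and> sTer Y (sComp Y A B) = sTer Y A"
    if AB: "composable Y A B" for A B
  proof -
    obtain a b where ab: "composable X a b" "A = orbit G ae a" "B = orbit G ae b"
      using compY_rep[OF AB] by blast
    have aE: "a \<in> sEdge X" "b \<in> sEdge X" using ab(1) by (auto simp: composable_def)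
    show ?thesis using comp_orbit[OF ab(1)] ab aE
      by (simp add: orbitE_in compE Yini Yter comp_ini comp_ter)
  qed
  have 3: "sComp Y (sComp Y A B) C = sComp Y A (sComp Y B C)"
    if ABC: "composable Y A B" "composable Y B C" for A B C
  proof -
    obtain a b where ab: "composable X a b" "A = orbit G ae a" "B = orbit G ae b"
      using compY_rep[OF ABC(1)] by blast
    have bE: "b \<in> sEdge X" using ab by (simp add: composable_def)
    obtain c where c: "composable X b c" "C = orbit G ae c"
      using compY_right[of b C] ABC(2) ab(3) bE by metis
    have "composable X (sComp X a b) c" using ab(1) c(1) by (simp add: composable_def compE comp_ini)
    moreover have "composable X a (sComp X b c)" using ab(1) c(1) by (simp add: composable_def compE comp_ter)
    moreover have "sComp X (sComp X a b) c = sComp X a (sComp X b c)"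
      using scw ab(1) c(1) by (simp add: is_scwol_def)
    ultimately show ?thesis using ab c by (simp add: comp_orbit)
  qed
  have 4: "\<forall>A\<in>sEdge Y. sIni Y A \<noteq> sTer Y A"
  proof
    fix A assume "A \<in> sEdge Y"
    then obtain a where a: "a \<in> sEdge X" "A = orbit G ae a" by (rule YE_rep)
    show "sIni Y A \<noteq> sTer Y A"
    proof
      assume "sIni Y A = sTer Y A"
      then have "sTer X a \<in> orbit G av (sIni X a)" using a orbitV_eq_iff iniV terV by (simp add: Yini Yter)
      then obtain g where "g \<in> carrier G" "sTer X a = av g (sIni X a)" by (rule orbit_memE)
      then show False using no_inv a by metis
    qed
  qed
  show ?thesis unfolding is_scwol_def using 1 2 3 4 by blast
qed

lemma stab_sub: "subgroup (stab G av x) G" if "x \<in> sVert X"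
proof (rule subgroup.intro)
  show "stab G av x \<subseteq> carrier G" by (auto simp: stab_def)
next
  fix a b assume "a \<in> stab G av x" "b \<in> stab G av x"
  then show "a \<otimes>\<^bsub>G\<^esub> b \<in> stab G av x" using that by (auto simp: stab_def av_mult)
next
  show "\<one>\<^bsub>G\<^esub> \<in> stab G av x" using that by (auto simp: stab_def av_one)
next
  fix a assume "a \<in> stab G av x"
  then show "inv\<^bsub>G\<^esub> a \<in> stab G av x" using that by (auto simp: stab_def av_inv_eq)
qed

lemma stab_edge: assumes "e \<in> sEdge X" "g \<in> stab G av (sIni X e)" shows "ae g e = e"
  using assms fix_edge by (auto simp: stab_def)

lemma stab_ini_ter: assumes "e \<in> sEdge X" "g \<in> stab G av (sIni X e)" shows "g \<in> stab G av (sTer X e)"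
proof -
  have "ae g e = e" using stab_edge assms .
  then have "av g (sTer X e) = sTer X e" using assms by (metis ae_ter stab_def mem_Collect_eq)
  then show ?thesis using assms by (simp add: stab_def)
qed

lemma stab_edge_iff: assumes "e \<in> sEdge X" "g \<in> carrier G" shows "ae g e = e \<longleftrightarrow> g \<in> stab G av (sIni X e)"
proof
  assume "ae g e = e"
  then have "sIni X (ae g e) = sIni X e" by simp
  then show "g \<in> stab G av (sIni X e)" using assms by (simp add: ae_ini stab_def)
next
  assume "g \<in> stab G av (sIni X e)" then show "ae g e = e" using stab_edge assms by simp
qed

lemma stab_conj: assumes "g \<in> carrier G" "x \<in> sVert X"
  shows "(\<lambda>u. g \<otimes>\<^bsub>G\<^esub> u \<otimes>\<^bsub>G\<^esub> inv\<^bsub>G\<^esub> g) ` stab G av x = stab G av (av g x)"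
proof
  show "(\<lambda>u. g \<otimes>\<^bsub>G\<^esub> u \<otimes>\<^bsub>G\<^esub> inv\<^bsub>G\<^esub> g) ` stab G av x \<subseteq> stab G av (av g x)"
    using assms by (auto simp: stab_def av_mult av_inv1 av_V)
  show "stab G av (av g x) \<subseteq> (\<lambda>u. g \<otimes>\<^bsub>G\<^esub> u \<otimes>\<^bsub>G\<^esub> inv\<^bsub>G\<^esub> g) ` stab G av x"
  proof
    fix v assume v: "v \<in> stab G av (av g x)"
    let ?u = "inv\<^bsub>G\<^esub> g \<otimes>\<^bsub>G\<^esub> v \<otimes>\<^bsub>G\<^esub> g"
    have vc: "v \<in> carrier G" "av v (av g x) = av g x" using v by (auto simp: stab_def)
    have "?u \<in> stab G av x" using assms vc by (simp add: stab_def av_mult av_inv1 av_V)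
    moreover have "v = g \<otimes>\<^bsub>G\<^esub> ?u \<otimes>\<^bsub>G\<^esub> inv\<^bsub>G\<^esub> g" using assms vc by (simp add: gsimps)
    ultimately show "v \<in> (\<lambda>u. g \<otimes>\<^bsub>G\<^esub> u \<otimes>\<^bsub>G\<^esub> inv\<^bsub>G\<^esub> g) ` stab G av x" by blast
  qed
qed

end



context sact begin
lemma Y_comp_props: assumes "composable Y A B"
  shows "sComp Y A B \<in> sEdge Y" "sIni Y (sComp Y A B) = sIni Y B" "sTer Y (sComp Y A B) = sTer Y A"
  using Y_scwol assms by (simp_all add: is_scwol_def)
lemma Y_assoc: "composable Y A B \<Longrightarrow> composable Y B C \<Longrightarrow> sComp Y (sComp Y A B) C = sComp Y A (sComp Y B C)"
  using Y_scwol by (simp add: is_scwol_def)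
lemma YiniV: "A \<in> sEdge Y \<Longrightarrow> sIni Y A \<in> sVert Y" using Y_scwol by (simp add: is_scwol_def)
lemma YterV: "A \<in> sEdge Y \<Longrightarrow> sTer Y A \<in> sVert Y" using Y_scwol by (simp add: is_scwol_def)
end

locale schoice = sact G X av ae
  for G :: "'g monoid" and X :: "('v, 'e) scwol"
    and av :: "'g \<Rightarrow> 'v \<Rightarrow> 'v" and ae :: "'g \<Rightarrow> 'e \<Rightarrow> 'e" +
  fixes bar :: "'v set \<Rightarrow> 'v" and h :: "'e set \<Rightarrow> 'g"
  assumes vc: "valid_choice G X av ae bar h"
begin

abbreviation "lift A \<equiv> lift_edge X bar A"
definition "eps A = ae (h A) (lift A)"
abbreviation "Gs \<equiv> assoc_groups G av bar"
abbreviation "psi \<equiv> assoc_psi G h"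
abbreviation "gab \<equiv> assoc_twist G X av ae h"

lemma bar_in: "\<sigma> \<in> sVert Y \<Longrightarrow> bar \<sigma> \<in> \<sigma>"
  using vc by (simp add: valid_choice_def Let_def)
lemma barV: assumes "\<sigma> \<in> sVert Y" shows "bar \<sigma> \<in> sVert X"
proof -
  obtain x where "x \<in> sVert X" "\<sigma> = orbit G av x" using assms by (rule YV_rep)
  then show ?thesis using bar_in[OF assms] orbitV_sub by blast
qed
lemma bar_orbit: "\<sigma> \<in> sVert Y \<Longrightarrow> \<sigma> = orbit G av (bar \<sigma>)"
  by (metis YV_rep bar_in orbitV_eq)
lemma h_in: "A \<in> sEdge Y \<Longrightarrow> h A \<in> carrier G"
  using vc by (simp add: valid_choice_def Let_def)
lemma h_ter: "A \<in> sEdge Y \<Longrightarrow> av (h A) (sTer X (lift A)) = bar (sTer Y A)"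
  using vc by (simp add: valid_choice_def Let_def)

lemma lift_ex: assumes "A \<in> sEdge Y" shows "\<exists>x. x \<in> A \<and> sIni X x = bar (sIni Y A)"
proof -
  obtain a where a: "a \<in> sEdge X" "A = orbit G ae a" using assms by (rule YE_rep)
  have "bar (sIni Y A) \<in> sIni Y A" using bar_in YiniV assms by blast
  then show ?thesis by (auto simp: Y_simps)
qed

lemma lift_uniq: assumes "A \<in> sEdge Y" "x \<in> A" "y \<in> A" "sIni X x = sIni X y" shows "x = y"
proof -
  obtain a where a: "a \<in> sEdge X" "A = orbit G ae a" using assms(1) by (rule YE_rep)
  show ?thesis using same_ini a assms by blast
qed

lemma lift_prop: assumes "A \<in> sEdge Y" shows "lift A \<in> A" "sIni X (lift A) = bar (sIni Y A)"
proof -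
  have "lift A \<in> A \<and> sIni X (lift A) = bar (sIni Y A)"
    unfolding lift_edge_def Y_simps
    by (rule theI') (use lift_ex[OF assms] lift_uniq[OF assms] in \<open>auto simp: Y_simps\<close>)
  then show "lift A \<in> A" "sIni X (lift A) = bar (sIni Y A)" by auto
qed

lemma lift_eq: assumes "A \<in> sEdge Y" "x \<in> A" "sIni X x = bar (sIni Y A)" shows "lift A = x"
  using lift_prop[OF assms(1)] lift_uniq[OF assms(1)] assms by metis

lemma YE_sub: "A \<in> sEdge Y \<Longrightarrow> A \<subseteq> sEdge X"
  by (auto simp: Y_simps orbit_def ae_E)
lemma YE_orbit: "A \<in> sEdge Y \<Longrightarrow> x \<in> A \<Longrightarrow> A = orbit G ae x"
  by (metis YE_rep orbitE_eq)

lemma liftE: "A \<in> sEdge Y \<Longrightarrow> lift A \<in> sEdge X"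
  using lift_prop YE_sub by blast

lemma eps_in: "A \<in> sEdge Y \<Longrightarrow> eps A \<in> A"
  unfolding eps_def using lift_prop(1) YE_orbit h_in by (metis orbit_memI)
lemma epsE: "A \<in> sEdge Y \<Longrightarrow> eps A \<in> sEdge X"
  using eps_in YE_sub by blast
lemma eps_ter: "A \<in> sEdge Y \<Longrightarrow> sTer X (eps A) = bar (sTer Y A)"
  unfolding eps_def using h_ter h_in liftE by (simp add: ae_ter)
lemma eps_ini: "A \<in> sEdge Y \<Longrightarrow> sIni X (eps A) = av (h A) (bar (sIni Y A))"
  unfolding eps_def using lift_prop h_in liftE by (simp add: ae_ini)
lemma eps_orbit: "A \<in> sEdge Y \<Longrightarrow> A = orbit G ae (eps A)"
  using eps_in YE_orbit by blast

lemma Gs_carrier: "carrier (Gs \<sigma>) = stab G av (bar \<sigma>)" by (simp add: assoc_groups_def)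
lemma Gs_mult: "mult (Gs \<sigma>) = mult G" by (simp add: assoc_groups_def)
lemma Gs_one: "one (Gs \<sigma>) = one G" by (simp add: assoc_groups_def)
lemma Gs_group: "\<sigma> \<in> sVert Y \<Longrightarrow> group (Gs \<sigma>)"
  unfolding assoc_groups_def using stab_sub barV G.subgroup_imp_group by blast
lemma Gs_inv: "\<sigma> \<in> sVert Y \<Longrightarrow> x \<in> stab G av (bar \<sigma>) \<Longrightarrow> inv\<^bsub>Gs \<sigma>\<^esub> x = inv\<^bsub>G\<^esub> x"
  unfolding assoc_groups_def using stab_sub barV G.m_inv_consistent by blast

lemma stab_carrier: "g \<in> stab G av x \<Longrightarrow> g \<in> carrier G" by (simp add: stab_def)

lemma psi_image: assumes "A \<in> sEdge Y"
  shows "psi A ` stab G av (bar (sIni Y A)) = stab G av (sIni X (eps A))"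
proof -
  have "psi A = (\<lambda>u. h A \<otimes>\<^bsub>G\<^esub> u \<otimes>\<^bsub>G\<^esub> inv\<^bsub>G\<^esub> h A)" by (simp add: assoc_psi_def fun_eq_iff)
  then show ?thesis using stab_conj[OF h_in[OF assms] barV[OF YiniV[OF assms]]] eps_ini[OF assms] by simp
qed

lemma psi_in: assumes "A \<in> sEdge Y" "g \<in> stab G av (bar (sIni Y A))"
  shows "psi A g \<in> stab G av (bar (sTer Y A))"
proof -
  have "psi A g \<in> stab G av (sIni X (eps A))" using psi_image assms by blast
  then show ?thesis using stab_ini_ter epsE eps_ter assms by metis
qed

lemma lift_comp: assumes "composable Y A B"
  shows "lift (sComp Y A B) = sComp X (ae (inv\<^bsub>G\<^esub> h B) (lift A)) (lift B)"
    and "sTer X (lift (sComp Y A B)) = av (inv\<^bsub>G\<^esub> h B) (sTer X (lift A))"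
proof -
  have AB: "A \<in> sEdge Y" "B \<in> sEdge Y" and iAtB: "sIni Y A = sTer Y B" using assms by (auto simp: composable_def)
  let ?a1 = "ae (inv\<^bsub>G\<^esub> h B) (lift A)"
  have hB: "h B \<in> carrier G" using h_in AB by blast
  have tb: "sTer X (lift B) = av (inv\<^bsub>G\<^esub> h B) (bar (sTer Y B))"
    using av_inv1[OF hB terV[OF liftE[OF AB(2)]]] h_ter[OF AB(2)] by simp
  have c: "composable X ?a1 (lift B)"
    using AB hB liftE lift_prop tb iAtB by (simp add: composable_def ae_E ae_ini)
  have o1: "orbit G ae ?a1 = A"
    using AB hB liftE lift_prop(1) by (metis G.inv_closed YE_orbit orbitE_eq orbit_memI)
  have o2: "orbit G ae (lift B) = B" using AB lift_prop(1) YE_orbit by metis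
  have "sComp X ?a1 (lift B) \<in> sComp Y A B" using comp_orbit[OF c] o1 o2 orbitE_self compE[OF c] by simp
  moreover have "sIni X (sComp X ?a1 (lift B)) = bar (sIni Y (sComp Y A B))"
    using comp_ini[OF c] Y_comp_props[OF assms] lift_prop AB by simp
  ultimately show l: "lift (sComp Y A B) = sComp X ?a1 (lift B)"
    using lift_eq Y_comp_props(1)[OF assms] by blast
  show "sTer X (lift (sComp Y A B)) = av (inv\<^bsub>G\<^esub> h B) (sTer X (lift A))"
    using l comp_ter[OF c] hB liftE[OF AB(1)] by (simp add: ae_ter)
qed

lemma gab_in: assumes "composable Y A B" shows "gab A B \<in> stab G av (bar (sTer Y A))"
proof -
  have AB: "A \<in> sEdge Y" "B \<in> sEdge Y" using assms by (auto simp: composable_def)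
  have ABc: "sComp Y A B \<in> sEdge Y" using Y_comp_props assms by blast
  have hs: "h A \<in> carrier G" "h B \<in> carrier G" "h (sComp Y A B) \<in> carrier G" using h_in AB ABc by auto
  have 1: "av (inv\<^bsub>G\<^esub> h (sComp Y A B)) (bar (sTer Y A)) = sTer X (lift (sComp Y A B))"
    using av_inv1[OF hs(3) terV[OF liftE[OF ABc]]] h_ter[OF ABc] Y_comp_props(3)[OF assms] by simp
  have "av (gab A B) (bar (sTer Y A)) = av (h A) (av (h B) (av (inv\<^bsub>G\<^esub> h (sComp Y A B)) (bar (sTer Y A))))"
    unfolding assoc_twist_def using hs barV YterV AB by (simp add: av_mult av_V)
  also have "\<dots> = bar (sTer Y A)"
    unfolding 1 lift_comp(2)[OF assms] using hs liftE AB terV h_ter by (simp add: av_inv2)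
  finally show ?thesis using hs unfolding assoc_twist_def by (simp add: stab_def)
qed

lemma Y_complex: "complex_of_groups Y Gs psi gab"
  unfolding complex_of_groups_def
proof (intro conjI ballI allI impI)
  show "is_scwol Y" by (rule Y_scwol)
  show "group (Gs \<sigma>)" if "\<sigma> \<in> sVert Y" for \<sigma> using Gs_group that .
  fix A assume A: "A \<in> sEdge Y"
  have hA: "h A \<in> carrier G" using h_in A .
  show "psi A \<in> hom (Gs (sIni Y A)) (Gs (sTer Y A))"
  proof (rule homI)
    fix x assume "x \<in> carrier (Gs (sIni Y A))"
    then show "psi A x \<in> carrier (Gs (sTer Y A))" using psi_in A by (simp add: Gs_carrier)
  next
    fix x y assume "x \<in> carrier (Gs (sIni Y A))" "y \<in> carrier (Gs (sIni Y A))"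
    then have "x \<in> carrier G" "y \<in> carrier G" by (auto simp: Gs_carrier stab_def)
    then show "psi A (x \<otimes>\<^bsub>Gs (sIni Y A)\<^esub> y) = psi A x \<otimes>\<^bsub>Gs (sTer Y A)\<^esub> psi A y"
      using hA by (simp add: Gs_mult assoc_psi_def gsimps)
  qed
  show "inj_on (psi A) (carrier (Gs (sIni Y A)))"
  proof (rule inj_onI)
    fix x y assume "x \<in> carrier (Gs (sIni Y A))" "y \<in> carrier (Gs (sIni Y A))" "psi A x = psi A y"
    then have "x \<in> carrier G" "y \<in> carrier G" "h A \<otimes>\<^bsub>G\<^esub> x \<otimes>\<^bsub>G\<^esub> inv\<^bsub>G\<^esub> h A = h A \<otimes>\<^bsub>G\<^esub> y \<otimes>\<^bsub>G\<^esub> inv\<^bsub>G\<^esub> h A"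
      by (auto simp: Gs_carrier stab_def assoc_psi_def)
    then show "x = y" using hA by (simp add: G.m_assoc)
  qed
next
  fix A B assume AB: "composable Y A B"
  have ABs: "A \<in> sEdge Y" "B \<in> sEdge Y" using AB by (auto simp: composable_def)
  have ABc: "sComp Y A B \<in> sEdge Y" using Y_comp_props AB by blast
  have hs: "h A \<in> carrier G" "h B \<in> carrier G" "h (sComp Y A B) \<in> carrier G" using h_in ABs ABc by auto
  show "gab A B \<in> carrier (Gs (sTer Y A))" using gab_in AB by (simp add: Gs_carrier)
  fix g assume "g \<in> carrier (Gs (sIni Y B))"
  then have g: "g \<in> carrier G" by (auto simp: Gs_carrier stab_def)
  have inv: "inv\<^bsub>Gs (sTer Y A)\<^esub> gab A B = inv\<^bsub>G\<^esub> gab A B"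
    using Gs_inv gab_in AB YterV ABs by blast
  show "gab A B \<otimes>\<^bsub>Gs (sTer Y A)\<^esub> psi (sComp Y A B) g \<otimes>\<^bsub>Gs (sTer Y A)\<^esub> inv\<^bsub>Gs (sTer Y A)\<^esub> gab A B =
        psi A (psi B g)"
    unfolding inv Gs_mult using hs g by (simp add: assoc_twist_def assoc_psi_def gsimps)
next
  fix A B C assume ABC: "composable Y A B \<and> composable Y B C"
  then have AB: "composable Y A B" and BC: "composable Y B C" by auto
  have ABs: "A \<in> sEdge Y" "B \<in> sEdge Y" "C \<in> sEdge Y" using AB BC by (auto simp: composable_def)
  have ABc: "sComp Y A B \<in> sEdge Y" "sComp Y B C \<in> sEdge Y" using Y_comp_props AB BC by blast+
  have ABCc: "sComp Y A (sComp Y B C) \<in> sEdge Y"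
    using Y_comp_props(1)[of A "sComp Y B C"] ABs ABc AB BC Y_comp_props(3)[OF BC]
    by (simp add: composable_def)
  have hs: "h A \<in> carrier G" "h B \<in> carrier G" "h C \<in> carrier G" "h (sComp Y A B) \<in> carrier G"
     "h (sComp Y B C) \<in> carrier G" "h (sComp Y A (sComp Y B C)) \<in> carrier G"
    using h_in ABs ABc ABCc by auto
  show "psi A (gab B C) \<otimes>\<^bsub>Gs (sTer Y A)\<^esub> gab A (sComp Y B C) =
        gab A B \<otimes>\<^bsub>Gs (sTer Y A)\<^esub> gab (sComp Y A B) C"
    unfolding Gs_mult using hs Y_assoc[OF AB BC] by (simp add: assoc_twist_def assoc_psi_def gsimps)
qed

end


lemma bij_conj:
  assumes "bij_betw f1 A B" "bij_betw f2 A' B'" "g ` A \<subseteq> A'" "\<And>a. a \<in> A \<Longrightarrow> F (f1 a) = f2 (g a)"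
  shows "bij_betw F B B' \<longleftrightarrow> bij_betw g A A'"
proof -
  have "bij_betw F B B' \<longleftrightarrow> bij_betw (F \<circ> f1) A B'" using bij_betw_comp_iff[OF assms(1)] .
  also have "\<dots> \<longleftrightarrow> bij_betw (f2 \<circ> g) A B'" using assms(4) by (intro bij_betw_cong) auto
  also have "\<dots> \<longleftrightarrow> bij_betw g A A'" using bij_betw_comp_iff2[OF assms(2,3)] by simp
  finally show ?thesis .
qed

locale mset = C1: schoice G X av ae bar h + C2: schoice G' X' av' ae' bar' h'
  for G :: "'g monoid" and X :: "('v, 'e) scwol" and av ae bar h
    and G' :: "'h monoid" and X' :: "('w, 'f) scwol" and av' ae' bar' h' +
  fixes \<Lambda> :: "'g \<Rightarrow> 'h" and Lv :: "'v \<Rightarrow> 'w" and Le :: "'e \<Rightarrow> 'f" and k :: "'v set \<Rightarrow> 'h"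
  assumes equiv: "equivariant_morph G X av ae G' X' av' ae' \<Lambda> Lv Le"
    and N: "\<forall>\<sigma>\<in>sVert C1.Y. k \<sigma> \<in> carrier G' \<and> av' (k \<sigma>) (Lv (bar \<sigma>)) = bar' (induced_map G' av' Lv \<sigma>)"
begin

abbreviation "lv \<equiv> induced_map G' av' Lv"
abbreviation "led \<equiv> induced_map G' ae' Le"

lemma Lmorph: "scwol_morph X X' Lv Le" using equiv by (simp add: equivariant_morph_def)
lemma LvV: "v \<in> sVert X \<Longrightarrow> Lv v \<in> sVert X'" using Lmorph by (auto simp: scwol_morph_def)
lemma LeE: "a \<in> sEdge X \<Longrightarrow> Le a \<in> sEdge X'" using Lmorph by (auto simp: scwol_morph_def)
lemma Le_ini: "a \<in> sEdge X \<Longrightarrow> sIni X' (Le a) = Lv (sIni X a)" using Lmorph by (auto simp: scwol_morph_def)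
lemma Le_ter: "a \<in> sEdge X \<Longrightarrow> sTer X' (Le a) = Lv (sTer X a)" using Lmorph by (auto simp: scwol_morph_def)
lemma Le_comp: "composable X a b \<Longrightarrow> Le (sComp X a b) = sComp X' (Le a) (Le b)" using Lmorph by (auto simp: scwol_morph_def)
lemma Lhom: "\<Lambda> \<in> hom G G'" using equiv by (simp add: equivariant_morph_def)
lemma L_in: "g \<in> carrier G \<Longrightarrow> \<Lambda> g \<in> carrier G'" using Lhom by (auto simp: hom_def)
lemma L_mult: "g \<in> carrier G \<Longrightarrow> g2 \<in> carrier G \<Longrightarrow> \<Lambda> (g \<otimes>\<^bsub>G\<^esub> g2) = \<Lambda> g \<otimes>\<^bsub>G'\<^esub> \<Lambda> g2"
  using Lhom by (auto simp: hom_def)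
lemma L_inv: "g \<in> carrier G \<Longrightarrow> \<Lambda> (inv\<^bsub>G\<^esub> g) = inv\<^bsub>G'\<^esub> \<Lambda> g"
  using group_hom.hom_inv[of G G' \<Lambda>] Lhom C1.grp C2.grp by (simp add: group_hom_def group_hom_axioms_def)
lemma L_one: "\<Lambda> \<one>\<^bsub>G\<^esub> = \<one>\<^bsub>G'\<^esub>"
  using group_hom.hom_one[of G G' \<Lambda>] Lhom C1.grp C2.grp by (simp add: group_hom_def group_hom_axioms_def)
lemma Lv_eq: "g \<in> carrier G \<Longrightarrow> v \<in> sVert X \<Longrightarrow> Lv (av g v) = av' (\<Lambda> g) (Lv v)"
  using equiv by (simp add: equivariant_morph_def)
lemma Le_eq: "g \<in> carrier G \<Longrightarrow> a \<in> sEdge X \<Longrightarrow> Le (ae g a) = ae' (\<Lambda> g) (Le a)"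
  using equiv by (simp add: equivariant_morph_def)

lemma k_in: "\<sigma> \<in> sVert C1.Y \<Longrightarrow> k \<sigma> \<in> carrier G'" using N by blast
lemma k_bar: "\<sigma> \<in> sVert C1.Y \<Longrightarrow> av' (k \<sigma>) (Lv (bar \<sigma>)) = bar' (lv \<sigma>)" using N by blast

lemma lv_orbit: assumes "x \<in> sVert X" shows "lv (orbit G av x) = orbit G' av' (Lv x)"
proof
  show "lv (orbit G av x) \<subseteq> orbit G' av' (Lv x)"
  proof
    fix z assume "z \<in> lv (orbit G av x)"
    then obtain g' y where z: "g' \<in> carrier G'" "y \<in> orbit G av x" "z = av' g' (Lv y)" by (auto simp: induced_map_def)
    obtain g where g: "g \<in> carrier G" "y = av g x" using z(2) by (rule C1.orbit_memE)
    have "z = av' (g' \<otimes>\<^bsub>G'\<^esub> \<Lambda> g) (Lv x)" using z g assms by (simp add: Lv_eq C2.av_mult L_in LvV)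
    then show "z \<in> orbit G' av' (Lv x)" using z(1) g(1) L_in by (intro C2.orbit_memI[of "g' \<otimes>\<^bsub>G'\<^esub> \<Lambda> g"]) auto
  qed
  show "orbit G' av' (Lv x) \<subseteq> lv (orbit G av x)"
  proof
    fix z assume "z \<in> orbit G' av' (Lv x)"
    then obtain g' where "g' \<in> carrier G'" "z = av' g' (Lv x)" by (rule C2.orbit_memE)
    then show "z \<in> lv (orbit G av x)" using assms C1.orbitV_self unfolding induced_map_def by blast
  qed
qed

lemma led_orbit: assumes "x \<in> sEdge X" shows "led (orbit G ae x) = orbit G' ae' (Le x)"
proof
  show "led (orbit G ae x) \<subseteq> orbit G' ae' (Le x)"
  proof
    fix z assume "z \<in> led (orbit G ae x)"
    then obtain g' y where z: "g' \<in> carrier G'" "y \<in> orbit G ae x" "z = ae' g' (Le y)" by (auto simp: induced_map_def)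
    obtain g where g: "g \<in> carrier G" "y = ae g x" using z(2) by (rule C1.orbit_memE)
    have "z = ae' (g' \<otimes>\<^bsub>G'\<^esub> \<Lambda> g) (Le x)" using z g assms by (simp add: Le_eq C2.ae_mult L_in LeE)
    then show "z \<in> orbit G' ae' (Le x)" using z(1) g(1) L_in by (intro C2.orbit_memI[of "g' \<otimes>\<^bsub>G'\<^esub> \<Lambda> g"]) auto
  qed
  show "orbit G' ae' (Le x) \<subseteq> led (orbit G ae x)"
  proof
    fix z assume "z \<in> orbit G' ae' (Le x)"
    then obtain g' where "g' \<in> carrier G'" "z = ae' g' (Le x)" by (rule C2.orbit_memE)
    then show "z \<in> led (orbit G ae x)" using assms C1.orbitE_self unfolding induced_map_def by blast
  qed
qed

lemma lvY: "\<sigma> \<in> sVert C1.Y \<Longrightarrow> lv \<sigma> \<in> sVert C2.Y"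
  by (auto elim!: C1.YV_rep simp: lv_orbit LvV C2.orbitV_in)
lemma ledY: "A \<in> sEdge C1.Y \<Longrightarrow> led A \<in> sEdge C2.Y"
  by (auto elim!: C1.YE_rep simp: led_orbit LeE C2.orbitE_in)
lemma led_ini: "A \<in> sEdge C1.Y \<Longrightarrow> sIni C2.Y (led A) = lv (sIni C1.Y A)"
  by (auto elim!: C1.YE_rep simp: led_orbit LeE C2.Yini C1.Yini lv_orbit C1.iniV Le_ini)
lemma led_ter: "A \<in> sEdge C1.Y \<Longrightarrow> sTer C2.Y (led A) = lv (sTer C1.Y A)"
  by (auto elim!: C1.YE_rep simp: led_orbit LeE C2.Yter C1.Yter lv_orbit C1.terV Le_ter)
lemma led_comp: assumes "composable C1.Y A B" shows "led (sComp C1.Y A B) = sComp C2.Y (led A) (led B)"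
proof -
  obtain a b where ab: "composable X a b" "A = orbit G ae a" "B = orbit G ae b" using C1.compY_rep[OF assms] by blast
  have c': "composable X' (Le a) (Le b)" using ab(1) by (auto simp: composable_def LeE Le_ini Le_ter)
  have aE: "a \<in> sEdge X" "b \<in> sEdge X" using ab by (auto simp: composable_def)
  show ?thesis using ab aE C1.comp_orbit[OF ab(1)] C2.comp_orbit[OF c'] C1.compE[OF ab(1)]
    by (simp add: led_orbit Le_comp)
qed

lemma Ymorph: "scwol_morph C1.Y C2.Y lv led"
  unfolding scwol_morph_def using lvY ledY led_ini led_ter led_comp by blast

abbreviation "outX x \<equiv> {a \<in> sEdge X. sIni X a = x}"
abbreviation "outX' x \<equiv> {a \<in> sEdge X'. sIni X' a = x}"
abbreviation "inX x \<equiv> {a \<in> sEdge X. sTer X a = x}"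
abbreviation "inX' x \<equiv> {a \<in> sEdge X'. sTer X' a = x}"

end

context sact begin
lemma out_bij: assumes "x \<in> sVert X"
  shows "bij_betw (orbit G ae) {a \<in> sEdge X. sIni X a = x} {A \<in> sEdge Y. sIni Y A = orbit G av x}"
proof (rule bij_betw_imageI)
  show "inj_on (orbit G ae) {a \<in> sEdge X. sIni X a = x}"
  proof (rule inj_onI)
    fix a b assume "a \<in> {a \<in> sEdge X. sIni X a = x}" "b \<in> {a \<in> sEdge X. sIni X a = x}" "orbit G ae a = orbit G ae b"
    then show "a = b" using same_ini[of a a b] orbitE_self by auto
  qed
  show "orbit G ae ` {a \<in> sEdge X. sIni X a = x} = {A \<in> sEdge Y. sIni Y A = orbit G av x}"
  proof
    show "orbit G ae ` {a \<in> sEdge X. sIni X a = x} \<subseteq> {A \<in> sEdge Y. sIni Y A = orbit G av x}"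
      by (auto simp: orbitE_in Yini)
    show "{A \<in> sEdge Y. sIni Y A = orbit G av x} \<subseteq> orbit G ae ` {a \<in> sEdge X. sIni X a = x}"
    proof
      fix A assume A: "A \<in> {A \<in> sEdge Y. sIni Y A = orbit G av x}"
      then obtain a where a: "a \<in> sEdge X" "A = orbit G ae a" by (auto elim: YE_rep)
      have "orbit G av (sIni X a) = orbit G av x" using A a Yini by simp
      then have "x \<in> orbit G av (sIni X a)" using orbitV_eq_iff iniV a assms by blast
      then obtain g where g: "g \<in> carrier G" "x = av g (sIni X a)" by (rule orbit_memE)
      have "ae g a \<in> {a \<in> sEdge X. sIni X a = x}" using g a by (simp add: ae_E ae_ini)
      moreover have "A = orbit G ae (ae g a)" using a g orbitE_eq orbit_memI by metis
      ultimately show "A \<in> orbit G ae ` {a \<in> sEdge X. sIni X a = x}" by blast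
    qed
  qed
qed
end

context mset begin

lemma nondeg_iff: "scwol_nondeg C1.Y C2.Y lv led \<longleftrightarrow> (\<forall>x\<in>sVert X. bij_betw Le (outX x) (outX' (Lv x)))"
proof -
  have "bij_betw led {A \<in> sEdge C1.Y. sIni C1.Y A = \<sigma>} {A \<in> sEdge C2.Y. sIni C2.Y A = lv \<sigma>}
        \<longleftrightarrow> bij_betw Le (outX x) (outX' (Lv x))" if x: "x \<in> sVert X" "\<sigma> = orbit G av x" for x \<sigma>
  proof -
    have "lv \<sigma> = orbit G' av' (Lv x)" using x lv_orbit by simp
    show ?thesis
    proof (rule bij_conj)
      show "bij_betw (orbit G ae) (outX x) {A \<in> sEdge C1.Y. sIni C1.Y A = \<sigma>}" using C1.out_bij x by simp
      show "bij_betw (orbit G' ae') (outX' (Lv x)) {A \<in> sEdge C2.Y. sIni C2.Y A = lv \<sigma>}"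
        using C2.out_bij LvV x lv_orbit by simp
      show "Le ` outX x \<subseteq> outX' (Lv x)" by (auto simp: LeE Le_ini)
      show "led (orbit G ae a) = orbit G' ae' (Le a)" if "a \<in> outX x" for a using that led_orbit by simp
    qed
  qed
  then show ?thesis
    unfolding scwol_nondeg_def using Ymorph
    by (auto simp: C1.Y_simps)
qed

end


context schoice begin

definition "lcos A e = {g \<in> stab G av (bar (sTer Y A)). ae g (eps A) = e}"

lemma stab_m: "x \<in> sVert X \<Longrightarrow> a \<in> stab G av x \<Longrightarrow> b \<in> stab G av x \<Longrightarrow> a \<otimes>\<^bsub>G\<^esub> b \<in> stab G av x"
  using stab_sub subgroup.m_closed by metis
lemma stab_inv: "x \<in> sVert X \<Longrightarrow> a \<in> stab G av x \<Longrightarrow> inv\<^bsub>G\<^esub> a \<in> stab G av x"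
  using stab_sub subgroup.m_inv_closed by metis

lemma eps_stab: assumes "A \<in> sEdge Y" "w \<in> stab G av (sIni X (eps A))" shows "w \<in> stab G av (bar (sTer Y A))"
  using stab_ini_ter[OF epsE[OF assms(1)] assms(2)] eps_ter[OF assms(1)] by simp

lemma cos_lcoset: assumes A: "A \<in> sEdge Y" and c: "c \<in> stab G av (bar (sTer Y A))"
  shows "c <#\<^bsub>Gs (sTer Y A)\<^esub> (psi A ` carrier (Gs (sIni Y A))) = lcos A (ae c (eps A))"
proof -
  have K: "psi A ` carrier (Gs (sIni Y A)) = stab G av (sIni X (eps A))"
    using psi_image[OF A] by (simp add: Gs_carrier)
  have cc: "c \<in> carrier G" using c by (simp add: stab_def)
  have bV: "bar (sTer Y A) \<in> sVert X" using barV YterV A by blast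
  have eE: "eps A \<in> sEdge X" using epsE A .
  have "c <#\<^bsub>G\<^esub> stab G av (sIni X (eps A)) = lcos A (ae c (eps A))"
    unfolding l_coset_def
  proof (rule Set.set_eqI, rule iffI)
    fix u assume "u \<in> (\<Union>w\<in>stab G av (sIni X (eps A)). {c \<otimes>\<^bsub>G\<^esub> w})"
    then obtain w where w: "w \<in> stab G av (sIni X (eps A))" "u = c \<otimes>\<^bsub>G\<^esub> w" by blast
    have wc: "w \<in> carrier G" using w by (simp add: stab_def)
    have "u \<in> stab G av (bar (sTer Y A))" using w eps_stab[OF A w(1)] stab_m[OF bV c] by simp
    moreover have "ae u (eps A) = ae c (eps A)" using w wc cc eE stab_edge[OF eE w(1)] by (simp add: ae_mult)
    ultimately show "u \<in> lcos A (ae c (eps A))" by (simp add: lcos_def)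
  next
    fix u assume "u \<in> lcos A (ae c (eps A))"
    then have u: "u \<in> stab G av (bar (sTer Y A))" "ae u (eps A) = ae c (eps A)" by (auto simp: lcos_def)
    have uc: "u \<in> carrier G" using u by (simp add: stab_def)
    let ?w = "inv\<^bsub>G\<^esub> c \<otimes>\<^bsub>G\<^esub> u"
    have "ae ?w (eps A) = eps A" using u uc cc eE by (simp add: ae_mult ae_inv1)
    then have "?w \<in> stab G av (sIni X (eps A))" using stab_edge_iff[OF eE] uc cc by simp
    moreover have "u = c \<otimes>\<^bsub>G\<^esub> ?w" using uc cc by (simp add: gsimps)
    ultimately show "u \<in> (\<Union>w\<in>stab G av (sIni X (eps A)). {c \<otimes>\<^bsub>G\<^esub> w})" by blast
  qed
  then show ?thesis unfolding K l_coset_def Gs_mult by simp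
qed

lemma cos_ex: assumes A: "A \<in> sEdge Y" and e: "e \<in> A" "sTer X e = bar (sTer Y A)"
  shows "\<exists>c\<in>stab G av (bar (sTer Y A)). e = ae c (eps A)"
proof -
  have "e \<in> orbit G ae (eps A)" using eps_orbit A e by blast
  then obtain c where c: "c \<in> carrier G" "e = ae c (eps A)" by (rule orbit_memE)
  have "av c (bar (sTer Y A)) = bar (sTer Y A)" using c e eps_ter[OF A] epsE[OF A] by (simp add: ae_ter)
  then show ?thesis using c by (auto simp: stab_def)
qed

lemma lcosets_char: assumes A: "A \<in> sEdge Y"
  shows "lcosets\<^bsub>Gs (sTer Y A)\<^esub> (psi A ` carrier (Gs (sIni Y A))) = lcos A ` {e \<in> A. sTer X e = bar (sTer Y A)}"
proof
  show "lcosets\<^bsub>Gs (sTer Y A)\<^esub> (psi A ` carrier (Gs (sIni Y A))) \<subseteq> lcos A ` {e \<in> A. sTer X e = bar (sTer Y A)}"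
  proof
    fix C assume "C \<in> lcosets\<^bsub>Gs (sTer Y A)\<^esub> (psi A ` carrier (Gs (sIni Y A)))"
    then obtain c where c: "c \<in> stab G av (bar (sTer Y A))" "C = c <#\<^bsub>Gs (sTer Y A)\<^esub> (psi A ` carrier (Gs (sIni Y A)))"
      by (auto simp: LCOSETS_def Gs_carrier)
    have cc: "c \<in> carrier G" "av c (bar (sTer Y A)) = bar (sTer Y A)" using c by (auto simp: stab_def)
    have "ae c (eps A) \<in> A" using eps_orbit[OF A] cc by (metis orbit_memI)
    moreover have "sTer X (ae c (eps A)) = bar (sTer Y A)" using cc eps_ter[OF A] epsE[OF A] by (simp add: ae_ter)
    ultimately show "C \<in> lcos A ` {e \<in> A. sTer X e = bar (sTer Y A)}" using cos_lcoset[OF A c(1)] c(2) by blast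
  qed
  show "lcos A ` {e \<in> A. sTer X e = bar (sTer Y A)} \<subseteq> lcosets\<^bsub>Gs (sTer Y A)\<^esub> (psi A ` carrier (Gs (sIni Y A)))"
  proof
    fix C assume "C \<in> lcos A ` {e \<in> A. sTer X e = bar (sTer Y A)}"
    then obtain e where e: "e \<in> A" "sTer X e = bar (sTer Y A)" "C = lcos A e" by blast
    obtain c where c: "c \<in> stab G av (bar (sTer Y A))" "e = ae c (eps A)" using cos_ex[OF A e(1,2)] by blast
    show "C \<in> lcosets\<^bsub>Gs (sTer Y A)\<^esub> (psi A ` carrier (Gs (sIni Y A)))"
      using cos_lcoset[OF A c(1)] c e(3) by (auto simp: LCOSETS_def Gs_carrier)
  qed
qed

lemma cos_inj: assumes A: "A \<in> sEdge Y" shows "inj_on (lcos A) {e \<in> A. sTer X e = bar (sTer Y A)}"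
proof (rule inj_onI)
  fix e1 e2 assume e1: "e1 \<in> {e \<in> A. sTer X e = bar (sTer Y A)}" and e2: "e2 \<in> {e \<in> A. sTer X e = bar (sTer Y A)}"
    and eq: "lcos A e1 = lcos A e2"
  obtain c where c: "c \<in> stab G av (bar (sTer Y A))" "e1 = ae c (eps A)" using cos_ex[OF A] e1 by blast
  have "c \<in> lcos A e1" using c by (simp add: lcos_def)
  then have "c \<in> lcos A e2" using eq by simp
  then show "e1 = e2" using c by (simp add: lcos_def)
qed

lemma cos_bij: assumes A: "A \<in> sEdge Y"
  shows "bij_betw (lcos A) {e \<in> A. sTer X e = bar (sTer Y A)} (lcosets\<^bsub>Gs (sTer Y A)\<^esub> (psi A ` carrier (Gs (sIni Y A))))"
  using cos_inj[OF A] lcosets_char[OF A] by (simp add: bij_betw_def)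

end

context mset begin

abbreviation "phi \<equiv> induced_cog_v G' \<Lambda> k"
abbreviation "lam \<equiv> induced_cog_e G' X \<Lambda> h h' led k"

lemma lam_unfold: "lam A = k (sTer C1.Y A) \<otimes>\<^bsub>G'\<^esub> \<Lambda> (h A) \<otimes>\<^bsub>G'\<^esub> inv\<^bsub>G'\<^esub> (k (sIni C1.Y A)) \<otimes>\<^bsub>G'\<^esub> inv\<^bsub>G'\<^esub> (h' (led A))"
  by (simp add: induced_cog_e_def C1.Y_simps)

lemma lam_carrier: "A \<in> sEdge C1.Y \<Longrightarrow> lam A \<in> carrier G'"
  unfolding lam_unfold using k_in C1.YiniV C1.YterV C1.h_in L_in C2.h_in ledY by simp

lemma lift'_eq: assumes A: "A \<in> sEdge C1.Y"
  shows "C2.lift (led A) = ae' (k (sIni C1.Y A)) (Le (C1.lift A))"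
proof -
  have iA: "sIni C1.Y A \<in> sVert C1.Y" using C1.YiniV A .
  have kc: "k (sIni C1.Y A) \<in> carrier G'" using k_in iA .
  have lE: "C1.lift A \<in> sEdge X" using C1.liftE A .
  have "led A = orbit G' ae' (Le (C1.lift A))" using C1.YE_orbit[OF A C1.lift_prop(1)[OF A]] led_orbit lE by metis
  then have "ae' (k (sIni C1.Y A)) (Le (C1.lift A)) \<in> led A" using kc by (metis C2.orbit_memI)
  moreover have "sIni X' (ae' (k (sIni C1.Y A)) (Le (C1.lift A))) = bar' (sIni C2.Y (led A))"
    using kc lE LeE C1.lift_prop(2)[OF A] k_bar[OF iA] led_ini[OF A] by (simp add: C2.ae_ini Le_ini)
  ultimately show ?thesis using C2.lift_eq ledY A by blast
qed

lemma KL: assumes A: "A \<in> sEdge C1.Y"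
  shows "ae' (lam A) (C2.eps (led A)) = ae' (k (sTer C1.Y A)) (Le (C1.eps A))"
proof -
  have iA: "sIni C1.Y A \<in> sVert C1.Y" "sTer C1.Y A \<in> sVert C1.Y" using C1.YiniV C1.YterV A by auto
  have c: "k (sIni C1.Y A) \<in> carrier G'" "k (sTer C1.Y A) \<in> carrier G'" "h A \<in> carrier G" "\<Lambda> (h A) \<in> carrier G'"
     "h' (led A) \<in> carrier G'"
    using k_in iA C1.h_in A L_in C2.h_in ledY by auto
  have lE: "C1.lift A \<in> sEdge X" "C2.lift (led A) \<in> sEdge X'" using C1.liftE A C2.liftE ledY by auto
  have "ae' (lam A) (C2.eps (led A)) =
     ae' (k (sTer C1.Y A)) (ae' (\<Lambda> (h A)) (ae' (inv\<^bsub>G'\<^esub> k (sIni C1.Y A)) (C2.lift (led A))))"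
    unfolding lam_unfold C2.eps_def using c lE by (simp add: C2.ae_mult C2.ae_E C2.ae_inv1)
  also have "\<dots> = ae' (k (sTer C1.Y A)) (ae' (\<Lambda> (h A)) (Le (C1.lift A)))"
    unfolding lift'_eq[OF A] using c lE LeE by (simp add: C2.ae_inv1)
  also have "\<dots> = ae' (k (sTer C1.Y A)) (Le (C1.eps A))"
    unfolding C1.eps_def using c lE by (simp add: Le_eq)
  finally show ?thesis .
qed

lemma lam_stab: assumes A: "A \<in> sEdge C1.Y" shows "lam A \<in> stab G' av' (bar' (lv (sTer C1.Y A)))"
proof -
  have tA: "sTer C1.Y A \<in> sVert C1.Y" using C1.YterV A by auto
  have lA: "led A \<in> sEdge C2.Y" using ledY A .
  have "bar' (lv (sTer C1.Y A)) = sTer X' (C2.eps (led A))" using C2.eps_ter[OF lA] led_ter[OF A] by simp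
  then have "av' (lam A) (bar' (lv (sTer C1.Y A))) = sTer X' (ae' (lam A) (C2.eps (led A)))"
    using lam_carrier[OF A] C2.epsE[OF lA] by (simp add: C2.ae_ter)
  also have "\<dots> = av' (k (sTer C1.Y A)) (Lv (bar (sTer C1.Y A)))"
    unfolding KL[OF A] using k_in[OF tA] C1.epsE[OF A] LeE C1.eps_ter[OF A] by (simp add: C2.ae_ter Le_ter)
  also have "\<dots> = bar' (lv (sTer C1.Y A))" using k_bar tA by blast
  finally show ?thesis using lam_carrier[OF A] by (simp add: stab_def)
qed

lemma phi_act: assumes s: "\<sigma> \<in> sVert C1.Y" and g: "g \<in> carrier G" and e: "e \<in> sEdge X"
  shows "ae' (phi \<sigma> g) (ae' (k \<sigma>) (Le e)) = ae' (k \<sigma>) (Le (ae g e))"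
  using k_in[OF s] g e L_in LeE
  by (simp add: induced_cog_v_def C2.ae_mult C2.ae_E C2.ae_inv1 Le_eq)

lemma phi_actv: assumes s: "\<sigma> \<in> sVert C1.Y" and g: "g \<in> carrier G" and v: "v \<in> sVert X"
  shows "av' (phi \<sigma> g) (av' (k \<sigma>) (Lv v)) = av' (k \<sigma>) (Lv (av g v))"
  using k_in[OF s] g v L_in LvV
  by (simp add: induced_cog_v_def C2.av_mult C2.av_V C2.av_inv1 Lv_eq)

lemma phi_carrier: "\<sigma> \<in> sVert C1.Y \<Longrightarrow> g \<in> carrier G \<Longrightarrow> phi \<sigma> g \<in> carrier G'"
  using k_in L_in by (simp add: induced_cog_v_def)

lemma phi_stab: assumes s: "\<sigma> \<in> sVert C1.Y" and g: "g \<in> stab G av (bar \<sigma>)"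
  shows "phi \<sigma> g \<in> stab G' av' (bar' (lv \<sigma>))"
proof -
  have gc: "g \<in> carrier G" "av g (bar \<sigma>) = bar \<sigma>" using g by (auto simp: stab_def)
  have "av' (phi \<sigma> g) (bar' (lv \<sigma>)) = bar' (lv \<sigma>)"
    using phi_actv[OF s gc(1) C1.barV[OF s]] gc(2) k_bar[OF s] by simp
  then show ?thesis using phi_carrier s gc by (simp add: stab_def)
qed

end


context mset begin

lemma F_eq: assumes A: "A \<in> sEdge C1.Y" and e: "e \<in> A" "sTer X e = bar (sTer C1.Y A)"
  shows "(phi (sTer C1.Y A) ` C1.lcos A e) <#>\<^bsub>C2.Gs (lv (sTer C1.Y A))\<^esub> {lam A}
           <#>\<^bsub>C2.Gs (lv (sTer C1.Y A))\<^esub> (C2.psi (led A) ` carrier (C2.Gs (sIni C2.Y (led A))))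
         = C2.lcos (led A) (ae' (k (sTer C1.Y A)) (Le e))"
proof -
  let ?s = "sTer C1.Y A" and ?a = "led A"
  have s: "?s \<in> sVert C1.Y" using C1.YterV A .
  have la: "?a \<in> sEdge C2.Y" using ledY A .
  have ta: "sTer C2.Y ?a = lv ?s" using led_ter A .
  have K: "C2.psi ?a ` carrier (C2.Gs (sIni C2.Y ?a)) = stab G' av' (sIni X' (C2.eps ?a))"
    using C2.psi_image[OF la] by (simp add: C2.Gs_carrier)
  have bV: "bar' (lv ?s) \<in> sVert X'" using C2.barV lvY s by blast
  have eE: "e \<in> sEdge X" using C1.YE_sub A e by blast
  have e'E: "C2.eps ?a \<in> sEdge X'" using C2.epsE la .
  have kc: "k ?s \<in> carrier G'" using k_in s .
  have lc: "lam A \<in> carrier G'" using lam_carrier A .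
  have act: "ae' (phi ?s g \<otimes>\<^bsub>G'\<^esub> lam A) (C2.eps ?a) = ae' (k ?s) (Le e)"
    if g: "g \<in> stab G av (bar ?s)" "ae g (C1.eps A) = e" for g
  proof -
    have gc: "g \<in> carrier G" using g by (simp add: stab_def)
    have "ae' (phi ?s g \<otimes>\<^bsub>G'\<^esub> lam A) (C2.eps ?a) = ae' (phi ?s g) (ae' (k ?s) (Le (C1.eps A)))"
      using phi_carrier[OF s gc] lc e'E KL[OF A] by (simp add: C2.ae_mult)
    also have "\<dots> = ae' (k ?s) (Le e)" using phi_act[OF s gc C1.epsE[OF A]] g by simp
    finally show ?thesis .
  qed
  have pstab: "phi ?s g \<otimes>\<^bsub>G'\<^esub> lam A \<in> stab G' av' (bar' (lv ?s))" if "g \<in> stab G av (bar ?s)" for g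
    using C2.stab_m[OF bV phi_stab[OF s that] lam_stab[OF A]] .
  obtain c where c: "c \<in> stab G av (bar ?s)" "e = ae c (C1.eps A)" using C1.cos_ex[OF A e] by blast
  have cl: "c \<in> C1.lcos A e" using c by (simp add: C1.lcos_def)
  show ?thesis
    unfolding K set_mult_def C2.Gs_mult
  proof (rule Set.set_eqI, rule iffI)
    fix u assume "u \<in> (\<Union>h\<in>\<Union>h\<in>phi ?s ` C1.lcos A e. \<Union>k\<in>{lam A}. {h \<otimes>\<^bsub>G'\<^esub> k}.
                   \<Union>k\<in>stab G' av' (sIni X' (C2.eps ?a)). {h \<otimes>\<^bsub>G'\<^esub> k})"
    then obtain g w where g: "g \<in> C1.lcos A e" and w: "w \<in> stab G' av' (sIni X' (C2.eps ?a))"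
      and u: "u = phi ?s g \<otimes>\<^bsub>G'\<^esub> lam A \<otimes>\<^bsub>G'\<^esub> w" by blast
    have g2: "g \<in> stab G av (bar ?s)" "ae g (C1.eps A) = e" using g by (auto simp: C1.lcos_def)
    have wc: "w \<in> carrier G'" using w by (simp add: stab_def)
    have "u \<in> stab G' av' (bar' (lv ?s))"
      using C2.stab_m[OF bV pstab[OF g2(1)]] C2.eps_stab[OF la w] u ta by simp
    moreover have "ae' u (C2.eps ?a) = ae' (k ?s) (Le e)"
      using u act[OF g2] wc C2.stab_edge[OF e'E w] pstab[OF g2(1)] e'E
      by (simp add: C2.ae_mult stab_def)
    ultimately show "u \<in> C2.lcos ?a (ae' (k ?s) (Le e))" by (simp add: C2.lcos_def ta)
  next
    fix u assume "u \<in> C2.lcos ?a (ae' (k ?s) (Le e))"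
    then have u: "u \<in> stab G' av' (bar' (lv ?s))" "ae' u (C2.eps ?a) = ae' (k ?s) (Le e)"
      by (auto simp: C2.lcos_def ta)
    have uc: "u \<in> carrier G'" using u by (simp add: stab_def)
    let ?p = "phi ?s c \<otimes>\<^bsub>G'\<^esub> lam A"
    have pc: "?p \<in> carrier G'" using pstab[OF c(1)] by (simp add: stab_def)
    let ?w = "inv\<^bsub>G'\<^esub> ?p \<otimes>\<^bsub>G'\<^esub> u"
    have "ae' ?w (C2.eps ?a) = ae' (inv\<^bsub>G'\<^esub> ?p) (ae' u (C2.eps ?a))"
      using uc pc e'E by (simp add: C2.ae_mult)
    also have "\<dots> = ae' (inv\<^bsub>G'\<^esub> ?p) (ae' ?p (C2.eps ?a))"
      using u(2) act[OF c(1) c(2)[symmetric]] by simp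
    also have "\<dots> = C2.eps ?a" using pc e'E by (simp add: C2.ae_inv1)
    finally have "ae' ?w (C2.eps ?a) = C2.eps ?a" .
    then have w: "?w \<in> stab G' av' (sIni X' (C2.eps ?a))" using C2.stab_edge_iff[OF e'E] uc pc by simp
    have "u = ?p \<otimes>\<^bsub>G'\<^esub> ?w" using uc pc by (simp add: C2.gsimps)
    then show "u \<in> (\<Union>h\<in>\<Union>h\<in>phi ?s ` C1.lcos A e. \<Union>k\<in>{lam A}. {h \<otimes>\<^bsub>G'\<^esub> k}.
                   \<Union>k\<in>stab G' av' (sIni X' (C2.eps ?a)). {h \<otimes>\<^bsub>G'\<^esub> k})"
      using cl w by blast
  qed
qed

lemma cov_iff: assumes s: "\<sigma> \<in> sVert C1.Y" and a': "a' \<in> sEdge C2.Y" "sTer C2.Y a' = lv \<sigma>"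
  shows "bij_betw (\<lambda>(a, C). (phi \<sigma> ` C) <#>\<^bsub>C2.Gs (lv \<sigma>)\<^esub> {lam a}
                     <#>\<^bsub>C2.Gs (lv \<sigma>)\<^esub> (C2.psi a' ` carrier (C2.Gs (sIni C2.Y a'))))
          {(a, C). a \<in> sEdge C1.Y \<and> led a = a' \<and> sTer C1.Y a = \<sigma> \<and>
                   C \<in> lcosets\<^bsub>C1.Gs \<sigma>\<^esub> (C1.psi a ` carrier (C1.Gs (sIni C1.Y a)))}
          (lcosets\<^bsub>C2.Gs (lv \<sigma>)\<^esub> (C2.psi a' ` carrier (C2.Gs (sIni C2.Y a'))))
     \<longleftrightarrow> bij_betw (\<lambda>e. ae' (k \<sigma>) (Le e)) {e \<in> sEdge X. sTer X e = bar \<sigma> \<and> led (orbit G ae e) = a'}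
            {e' \<in> a'. sTer X' e' = bar' (lv \<sigma>)}"
proof (rule bij_conj)
  let ?E = "{e \<in> sEdge X. sTer X e = bar \<sigma> \<and> led (orbit G ae e) = a'}"
  let ?D = "{(a, C). a \<in> sEdge C1.Y \<and> led a = a' \<and> sTer C1.Y a = \<sigma> \<and>
                   C \<in> lcosets\<^bsub>C1.Gs \<sigma>\<^esub> (C1.psi a ` carrier (C1.Gs (sIni C1.Y a)))}"
  let ?al = "\<lambda>e. (orbit G ae e, C1.lcos (orbit G ae e) e)"
  have bs: "bar \<sigma> \<in> sVert X" using C1.barV s .
  have tE: "sTer C1.Y (orbit G ae e) = \<sigma>" if "e \<in> ?E" for e
    using that C1.Yter C1.bar_orbit[OF s] by simp
  have oE: "orbit G ae e \<in> sEdge C1.Y" "e \<in> orbit G ae e" if "e \<in> ?E" for e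
    using that C1.orbitE_in C1.orbitE_self by auto
  show "bij_betw ?al ?E ?D"
  proof (rule bij_betw_imageI)
    show "inj_on ?al ?E"
    proof (rule inj_onI)
      fix e1 e2 assume e1: "e1 \<in> ?E" and e2: "e2 \<in> ?E" and eq: "?al e1 = ?al e2"
      then have o: "orbit G ae e1 = orbit G ae e2" and l: "C1.lcos (orbit G ae e1) e1 = C1.lcos (orbit G ae e1) e2" by auto
      show "e1 = e2" using C1.cos_inj[OF oE(1)[OF e1]] l e1 e2 oE[OF e1] oE[OF e2] o tE[OF e1]
        by (auto simp: inj_on_def)
    qed
    show "?al ` ?E = ?D"
    proof
      show "?al ` ?E \<subseteq> ?D"
      proof
        fix z assume "z \<in> ?al ` ?E"
        then obtain e where e: "e \<in> ?E" "z = ?al e" by blast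
        have "C1.lcos (orbit G ae e) e \<in> lcosets\<^bsub>C1.Gs \<sigma>\<^esub> (C1.psi (orbit G ae e) ` carrier (C1.Gs (sIni C1.Y (orbit G ae e))))"
          using C1.lcosets_char[OF oE(1)[OF e(1)]] tE[OF e(1)] oE(2)[OF e(1)] e(1) by auto
        then show "z \<in> ?D" using e oE tE by auto
      qed
      show "?D \<subseteq> ?al ` ?E"
      proof
        fix z assume "z \<in> ?D"
        then obtain A C where z: "z = (A, C)" "A \<in> sEdge C1.Y" "led A = a'" "sTer C1.Y A = \<sigma>"
          "C \<in> lcosets\<^bsub>C1.Gs \<sigma>\<^esub> (C1.psi A ` carrier (C1.Gs (sIni C1.Y A)))" by auto
        then obtain e where e: "e \<in> A" "sTer X e = bar \<sigma>" "C = C1.lcos A e"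
          using C1.lcosets_char[OF z(2)] by auto
        have eE: "e \<in> sEdge X" using C1.YE_sub z(2) e(1) by blast
        have oe: "orbit G ae e = A" using C1.YE_orbit z(2) e(1) by simp
        have "e \<in> ?E" using eE e oe z by simp
        then show "z \<in> ?al ` ?E" using z e oe by force
      qed
    qed
  qed
  show "bij_betw (C2.lcos a') {e' \<in> a'. sTer X' e' = bar' (lv \<sigma>)}
          (lcosets\<^bsub>C2.Gs (lv \<sigma>)\<^esub> (C2.psi a' ` carrier (C2.Gs (sIni C2.Y a'))))"
    using C2.cos_bij[OF a'(1)] a'(2) by simp
  show "(\<lambda>e. ae' (k \<sigma>) (Le e)) ` ?E \<subseteq> {e' \<in> a'. sTer X' e' = bar' (lv \<sigma>)}"
  proof
    fix z assume "z \<in> (\<lambda>e. ae' (k \<sigma>) (Le e)) ` ?E"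
    then obtain e where e: "e \<in> ?E" "z = ae' (k \<sigma>) (Le e)" by blast
    have eE: "e \<in> sEdge X" using e by simp
    have "z \<in> orbit G' ae' (Le e)" using e(2) k_in[OF s] by (metis C2.orbit_memI)
    then have "z \<in> a'" using e(1) led_orbit eE by auto
    moreover have "sTer X' z = bar' (lv \<sigma>)" using e eE k_in[OF s] k_bar[OF s] LeE by (simp add: C2.ae_ter Le_ter)
    ultimately show "z \<in> {e' \<in> a'. sTer X' e' = bar' (lv \<sigma>)}" by simp
  qed
  fix e assume e: "e \<in> ?E"
  have A: "orbit G ae e \<in> sEdge C1.Y" using oE e by blast
  have "(phi (sTer C1.Y (orbit G ae e)) ` C1.lcos (orbit G ae e) e) <#>\<^bsub>C2.Gs (lv (sTer C1.Y (orbit G ae e)))\<^esub> {lam (orbit G ae e)}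
           <#>\<^bsub>C2.Gs (lv (sTer C1.Y (orbit G ae e)))\<^esub> (C2.psi (led (orbit G ae e)) ` carrier (C2.Gs (sIni C2.Y (led (orbit G ae e)))))
         = C2.lcos (led (orbit G ae e)) (ae' (k (sTer C1.Y (orbit G ae e))) (Le e))"
    using F_eq[OF A oE(2)[OF e]] e tE[OF e] by simp
  then show "(\<lambda>(a, C). (phi \<sigma> ` C) <#>\<^bsub>C2.Gs (lv \<sigma>)\<^esub> {lam a}
                     <#>\<^bsub>C2.Gs (lv \<sigma>)\<^esub> (C2.psi a' ` carrier (C2.Gs (sIni C2.Y a')))) (?al e)
        = C2.lcos a' (ae' (k \<sigma>) (Le e))"
    using tE[OF e] e by simp
qed

end


context mset begin

lemma phi_hom: assumes s: "\<sigma> \<in> sVert C1.Y" shows "phi \<sigma> \<in> hom (C1.Gs \<sigma>) (C2.Gs (lv \<sigma>))"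
proof (rule homI)
  fix x assume "x \<in> carrier (C1.Gs \<sigma>)"
  then show "phi \<sigma> x \<in> carrier (C2.Gs (lv \<sigma>))" using phi_stab s by (simp add: C1.Gs_carrier C2.Gs_carrier)
next
  fix x y assume "x \<in> carrier (C1.Gs \<sigma>)" "y \<in> carrier (C1.Gs \<sigma>)"
  then have xy: "x \<in> carrier G" "y \<in> carrier G" by (auto simp: C1.Gs_carrier stab_def)
  then show "phi \<sigma> (x \<otimes>\<^bsub>C1.Gs \<sigma>\<^esub> y) = phi \<sigma> x \<otimes>\<^bsub>C2.Gs (lv \<sigma>)\<^esub> phi \<sigma> y"
    using k_in[OF s] L_in by (simp add: C1.Gs_mult C2.Gs_mult induced_cog_v_def L_mult C2.gsimps)
qed

lemma cogm: "cog_morph C1.Y C1.Gs C1.psi C1.gab C2.Y C2.Gs C2.psi C2.gab lv led phi lam"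
  unfolding cog_morph_def
proof (intro conjI ballI allI impI)
  show "complex_of_groups C1.Y C1.Gs C1.psi C1.gab" by (rule C1.Y_complex)
  show "complex_of_groups C2.Y C2.Gs C2.psi C2.gab" by (rule C2.Y_complex)
  show "scwol_morph C1.Y C2.Y lv led" by (rule Ymorph)
  show "phi \<sigma> \<in> hom (C1.Gs \<sigma>) (C2.Gs (lv \<sigma>))" if "\<sigma> \<in> sVert C1.Y" for \<sigma> using phi_hom that .
next
  fix A assume A: "A \<in> sEdge C1.Y"
  show "lam A \<in> carrier (C2.Gs (lv (sTer C1.Y A)))" using lam_stab A by (simp add: C2.Gs_carrier)
  fix g assume "g \<in> carrier (C1.Gs (sIni C1.Y A))"
  then have g: "g \<in> carrier G" by (auto simp: C1.Gs_carrier stab_def)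
  have s: "sIni C1.Y A \<in> sVert C1.Y" "sTer C1.Y A \<in> sVert C1.Y" using C1.YiniV C1.YterV A by auto
  have inveq: "inv\<^bsub>C2.Gs (lv (sTer C1.Y A))\<^esub> lam A = inv\<^bsub>G'\<^esub> lam A"
    using C2.Gs_inv lvY s lam_stab A by blast
  have c: "k (sIni C1.Y A) \<in> carrier G'" "k (sTer C1.Y A) \<in> carrier G'" "h A \<in> carrier G"
     "h' (led A) \<in> carrier G'"
    using k_in s C1.h_in A C2.h_in ledY by auto
  show "lam A \<otimes>\<^bsub>C2.Gs (lv (sTer C1.Y A))\<^esub> C2.psi (led A) (phi (sIni C1.Y A) g) \<otimes>\<^bsub>C2.Gs (lv (sTer C1.Y A))\<^esub>
          inv\<^bsub>C2.Gs (lv (sTer C1.Y A))\<^esub> lam A = phi (sTer C1.Y A) (C1.psi A g)"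
    unfolding inveq C2.Gs_mult using c g L_in
    by (simp add: lam_unfold assoc_psi_def induced_cog_v_def L_mult L_inv C2.gsimps)
next
  fix A B assume AB: "composable C1.Y A B"
  have ABs: "A \<in> sEdge C1.Y" "B \<in> sEdge C1.Y" and iAtB: "sIni C1.Y A = sTer C1.Y B" using AB by (auto simp: composable_def)
  have ABc: "sComp C1.Y A B \<in> sEdge C1.Y" using C1.Y_comp_props AB by blast
  have s: "sIni C1.Y A \<in> sVert C1.Y" "sTer C1.Y A \<in> sVert C1.Y" "sIni C1.Y B \<in> sVert C1.Y"
    using C1.YiniV C1.YterV ABs by auto
  have c: "k (sIni C1.Y A) \<in> carrier G'" "k (sTer C1.Y A) \<in> carrier G'" "k (sIni C1.Y B) \<in> carrier G'"
     "h A \<in> carrier G" "h B \<in> carrier G" "h (sComp C1.Y A B) \<in> carrier G"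
     "h' (led A) \<in> carrier G'" "h' (led B) \<in> carrier G'" "h' (led (sComp C1.Y A B)) \<in> carrier G'"
    using k_in s C1.h_in ABs ABc C2.h_in ledY by auto
  have lc: "sComp C2.Y (led A) (led B) = led (sComp C1.Y A B)" using led_comp AB by simp
  show "phi (sTer C1.Y A) (C1.gab A B) \<otimes>\<^bsub>C2.Gs (lv (sTer C1.Y A))\<^esub> lam (sComp C1.Y A B) =
        lam A \<otimes>\<^bsub>C2.Gs (lv (sTer C1.Y A))\<^esub> C2.psi (led A) (lam B) \<otimes>\<^bsub>C2.Gs (lv (sTer C1.Y A))\<^esub>
        C2.gab (led A) (led B)"
    unfolding C2.Gs_mult lam_unfold C1.Y_comp_props(2,3)[OF AB] assoc_twist_def lc
    using c L_in iAtB by (simp add: assoc_psi_def induced_cog_v_def L_mult L_inv C2.gsimps)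
qed

end


locale cov =
  fixes X :: "('v, 'e) scwol" and X' :: "('w, 'f) scwol" and Lv :: "'v \<Rightarrow> 'w" and Le :: "'e \<Rightarrow> 'f"
  assumes scX: "is_scwol X" and scX': "is_scwol X'" and mor: "scwol_morph X X' Lv Le"
    and outb: "\<forall>x\<in>sVert X. bij_betw Le {a \<in> sEdge X. sIni X a = x} {a \<in> sEdge X'. sIni X' a = Lv x}"
    and inb: "\<forall>x\<in>sVert X. bij_betw Le {a \<in> sEdge X. sTer X a = x} {a \<in> sEdge X'. sTer X' a = Lv x}"
begin

lemma LvV: "v \<in> sVert X \<Longrightarrow> Lv v \<in> sVert X'" using mor by (auto simp: scwol_morph_def)
lemma LeE: "a \<in> sEdge X \<Longrightarrow> Le a \<in> sEdge X'" using mor by (auto simp: scwol_morph_def)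
lemma Le_ini: "a \<in> sEdge X \<Longrightarrow> sIni X' (Le a) = Lv (sIni X a)" using mor by (auto simp: scwol_morph_def)
lemma Le_ter: "a \<in> sEdge X \<Longrightarrow> sTer X' (Le a) = Lv (sTer X a)" using mor by (auto simp: scwol_morph_def)
lemma Le_comp: "composable X a b \<Longrightarrow> Le (sComp X a b) = sComp X' (Le a) (Le b)" using mor by (auto simp: scwol_morph_def)
lemma iniV: "a \<in> sEdge X \<Longrightarrow> sIni X a \<in> sVert X" using scX by (simp add: is_scwol_def)
lemma terV: "a \<in> sEdge X \<Longrightarrow> sTer X a \<in> sVert X" using scX by (simp add: is_scwol_def)

lemma out_inj: assumes "e1 \<in> sEdge X" "e2 \<in> sEdge X" "sIni X e1 = sIni X e2" "Le e1 = Le e2" shows "e1 = e2"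
proof -
  have "inj_on Le {a \<in> sEdge X. sIni X a = sIni X e1}" using outb iniV[OF assms(1)] by (simp add: bij_betw_def)
  then show ?thesis using assms by (auto dest: inj_onD)
qed
lemma in_inj: assumes "e1 \<in> sEdge X" "e2 \<in> sEdge X" "sTer X e1 = sTer X e2" "Le e1 = Le e2" shows "e1 = e2"
proof -
  have "inj_on Le {a \<in> sEdge X. sTer X a = sTer X e1}" using inb terV[OF assms(1)] by (simp add: bij_betw_def)
  then show ?thesis using assms by (auto dest: inj_onD)
qed
lemma out_surj: assumes "x \<in> sVert X" "e' \<in> sEdge X'" "sIni X' e' = Lv x" shows "\<exists>e\<in>sEdge X. sIni X e = x \<and> Le e = e'"
proof -
  have "Le ` {a \<in> sEdge X. sIni X a = x} = {a \<in> sEdge X'. sIni X' a = Lv x}" using outb assms(1) by (simp add: bij_betw_def)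
  then have "e' \<in> Le ` {a \<in> sEdge X. sIni X a = x}" using assms by simp
  then show ?thesis by auto
qed
lemma in_surj: assumes "x \<in> sVert X" "e' \<in> sEdge X'" "sTer X' e' = Lv x" shows "\<exists>e\<in>sEdge X. sTer X e = x \<and> Le e = e'"
proof -
  have "Le ` {a \<in> sEdge X. sTer X a = x} = {a \<in> sEdge X'. sTer X' a = Lv x}" using inb assms(1) by (simp add: bij_betw_def)
  then have "e' \<in> Le ` {a \<in> sEdge X. sTer X a = x}" using assms by simp
  then show ?thesis by auto
qed

definition "mp q = map (\<lambda>(e, d). (Le e, d)) q"
definition "R y p w \<longleftrightarrow> (\<exists>q. epath X y q w \<and> mp q = p)"

lemma map_path: "epath X y q w \<Longrightarrow> epath X' (Lv y) (mp q) (Lv w)"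
proof (induction q arbitrary: y)
  case Nil then show ?case by (auto simp: mp_def LvV)
next
  case (Cons x q) then show ?case by (cases x) (auto simp: mp_def LeE Le_ini Le_ter)
qed

lemma lift_ex: "y \<in> sVert X \<Longrightarrow> epath X' (Lv y) p w' \<Longrightarrow> \<exists>w. R y p w \<and> Lv w = w'"
proof (induction p arbitrary: y)
  case Nil then show ?case by (auto simp: R_def mp_def intro!: exI[of _ "[]"])
next
  case (Cons x p)
  obtain e' d where x: "x = (e', d)" by (cases x)
  show ?case
  proof (cases d)
    case True
    then have e': "e' \<in> sEdge X'" "sIni X' e' = Lv y" "epath X' (sTer X' e') p w'" using Cons.prems x by auto
    obtain e where e: "e \<in> sEdge X" "sIni X e = y" "Le e = e'" using out_surj[OF Cons.prems(1) e'(1,2)] by blast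
    have "epath X' (Lv (sTer X e)) p w'" using e e' Le_ter by metis
    then obtain w q where "epath X (sTer X e) q w" "mp q = p" "Lv w = w'"
      using Cons.IH[of "sTer X e"] terV e by (auto simp: R_def)
    then show ?thesis using e True x by (auto simp: R_def mp_def intro!: exI[of _ "(e, True) # q"])
  next
    case False
    then have e': "e' \<in> sEdge X'" "sTer X' e' = Lv y" "epath X' (sIni X' e') p w'" using Cons.prems x by auto
    obtain e where e: "e \<in> sEdge X" "sTer X e = y" "Le e = e'" using in_surj[OF Cons.prems(1) e'(1,2)] by blast
    have "epath X' (Lv (sIni X e)) p w'" using e e' Le_ini by metis
    then obtain w q where "epath X (sIni X e) q w" "mp q = p" "Lv w = w'"
      using Cons.IH[of "sIni X e"] iniV e by (auto simp: R_def)
    then show ?thesis using e False x by (auto simp: R_def mp_def intro!: exI[of _ "(e, False) # q"])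
  qed
qed

lemma lift_uniq: "epath X y q1 w1 \<Longrightarrow> epath X y q2 w2 \<Longrightarrow> mp q1 = mp q2 \<Longrightarrow> w1 = w2"
proof (induction q1 arbitrary: y q2)
  case Nil then show ?case by (cases q2) (auto simp: mp_def)
next
  case (Cons x q1)
  obtain e1 d1 where x: "x = (e1, d1)" by (cases x)
  obtain e2 d2 q2' where q2: "q2 = (e2, d2) # q2'" using Cons.prems(3) by (cases q2) (auto simp: mp_def)
  have eq: "Le e1 = Le e2" "d1 = d2" "mp q1 = mp q2'" using Cons.prems(3) x q2 by (auto simp: mp_def)
  show ?case
  proof (cases d1)
    case True
    then have "e1 = e2" using Cons.prems x q2 eq out_inj by auto
    then show ?thesis using Cons.IH[of "sTer X e1" q2'] Cons.prems x q2 eq True by auto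
  next
    case False
    then have "e1 = e2" using Cons.prems x q2 eq in_inj by auto
    then show ?thesis using Cons.IH[of "sIni X e1" q2'] Cons.prems x q2 eq False by auto
  qed
qed

lemma R_uniq: "R y p w1 \<Longrightarrow> R y p w2 \<Longrightarrow> w1 = w2"
  unfolding R_def using lift_uniq by metis

lemma R_append: "R y (p1 @ p2) w \<longleftrightarrow> (\<exists>z. R y p1 z \<and> R z p2 w)"
proof
  assume "R y (p1 @ p2) w"
  then obtain q where q: "epath X y q w" "mp q = p1 @ p2" by (auto simp: R_def)
  then obtain q1 q2 where "q = q1 @ q2" "mp q1 = p1" "mp q2 = p2" by (auto simp: mp_def map_eq_append_conv)
  then show "\<exists>z. R y p1 z \<and> R z p2 w" using q epath_append[OF scX] by (auto simp: R_def)
next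
  assume "\<exists>z. R y p1 z \<and> R z p2 w"
  then obtain z q1 q2 where "epath X y q1 z" "mp q1 = p1" "epath X z q2 w" "mp q2 = p2" by (auto simp: R_def)
  then show "R y (p1 @ p2) w" unfolding R_def using epath_append[OF scX] by (auto simp: mp_def intro!: exI[of _ "q1 @ q2"])
qed

lemma R_single: "R y [(e', d)] w \<longleftrightarrow> (\<exists>e. e \<in> sEdge X \<and> Le e = e' \<and> y = (if d then sIni X e else sTer X e)
     \<and> w = (if d then sTer X e else sIni X e))"
proof
  assume "R y [(e', d)] w" then show "\<exists>e. e \<in> sEdge X \<and> Le e = e' \<and> y = (if d then sIni X e else sTer X e)
     \<and> w = (if d then sTer X e else sIni X e)"
    unfolding R_def mp_def by (auto simp: Cons_eq_map_conv split: prod.splits)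
next
  assume "\<exists>e. e \<in> sEdge X \<and> Le e = e' \<and> y = (if d then sIni X e else sTer X e)
     \<and> w = (if d then sTer X e else sIni X e)"
  then obtain e where e: "e \<in> sEdge X" "Le e = e'" "y = (if d then sIni X e else sTer X e)"
     "w = (if d then sTer X e else sIni X e)" by blast
  show "R y [(e', d)] w" unfolding R_def mp_def
    by (rule exI[of _ "[(e, d)]"]) (use e in \<open>auto simp: iniV terV\<close>)
qed

lemma backtrack_end: assumes "R z [(e', d), (e', \<not> d)] z'" shows "z' = z"
proof -
  obtain m where m: "R z [(e', d)] m" "R m [(e', \<not> d)] z'" using assms R_append[of z "[(e', d)]" "[(e', \<not> d)]"] by auto
  obtain e1 where e1: "e1 \<in> sEdge X" "Le e1 = e'" "z = (if d then sIni X e1 else sTer X e1)" "m = (if d then sTer X e1 else sIni X e1)"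
    using m(1) R_single by blast
  obtain e2 where e2: "e2 \<in> sEdge X" "Le e2 = e'" "m = (if \<not> d then sIni X e2 else sTer X e2)" "z' = (if \<not> d then sTer X e2 else sIni X e2)"
    using m(2) R_single by blast
  show ?thesis
  proof (cases d)
    case True
    then have "e1 = e2" using e1 e2 in_inj by auto
    then show ?thesis using e1 e2 True by auto
  next
    case False
    then have "e1 = e2" using e1 e2 out_inj by auto
    then show ?thesis using e1 e2 False by auto
  qed
qed

lemma triangle_end: assumes "composable X' a b" "R z [(b, True), (a, True)] z1" "R z [(sComp X' a b, True)] z2"
  shows "z1 = z2"
proof -
  obtain m where m: "R z [(b, True)] m" "R m [(a, True)] z1" using assms(2) R_append[of z "[(b, True)]" "[(a, True)]"] by auto
  obtain b1 where b1: "b1 \<in> sEdge X" "Le b1 = b" "z = sIni X b1" "m = sTer X b1" using m(1) R_single by force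
  obtain a1 where a1: "a1 \<in> sEdge X" "Le a1 = a" "m = sIni X a1" "z1 = sTer X a1" using m(2) R_single by force
  obtain c where c: "c \<in> sEdge X" "Le c = sComp X' a b" "z = sIni X c" "z2 = sTer X c" using assms(3) R_single by force
  have ab: "composable X a1 b1" using a1 b1 by (simp add: composable_def)
  have "sComp X a1 b1 \<in> sEdge X" "sIni X (sComp X a1 b1) = z" "sTer X (sComp X a1 b1) = z1"
    using scX ab a1 b1 by (auto simp: is_scwol_def)
  moreover have "Le (sComp X a1 b1) = sComp X' a b" using Le_comp[OF ab] a1 b1 by simp
  ultimately have "c = sComp X a1 b1" using out_inj c by metis
  then show ?thesis using c \<open>sTer X (sComp X a1 b1) = z1\<close> by simp
qed

lemma step_end: assumes "ehstep X' p r" "R y p w1" "R y r w2" shows "w1 = w2"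
  using assms(1)
proof (cases rule: ehstep.cases)
  case (backtrack e u d v)
  from assms(2) obtain z1 z1' where A: "R y u z1" "R z1 [(e, d), (e, \<not> d)] z1'" "R z1' v w1"
    unfolding backtrack R_append by blast
  from assms(3) obtain z2 where B: "R y u z2" "R z2 v w2" unfolding backtrack R_append by blast
  have "z1 = z2" using A(1) B(1) by (rule R_uniq)
  moreover have "z1' = z1" using backtrack_end A(2) by blast
  ultimately have "R z1' v w2" using B(2) by simp
  then show ?thesis using A(3) R_uniq by blast
next
  case (triangle a b u v)
  from assms(2) obtain z1 z1' where A: "R y u z1" "R z1 [(b, True), (a, True)] z1'" "R z1' v w1"
    unfolding triangle R_append by blast
  from assms(3) obtain z2 z2' where B: "R y u z2" "R z2 [(sComp X' a b, True)] z2'" "R z2' v w2"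
    unfolding triangle R_append by blast
  have "z1 = z2" using A(1) B(1) by (rule R_uniq)
  then have "z1' = z2'" using triangle_end[OF triangle(3) A(2)] B(2) by simp
  then have "R z1' v w2" using B(3) by simp
  then show ?thesis using A(3) R_uniq by blast
qed

lemma Lv_inj: assumes conn: "scwol_connected X" and sc': "scwol_simply_connected X'"
  and x: "x1 \<in> sVert X" "x2 \<in> sVert X" "Lv x1 = Lv x2" shows "x1 = x2"
proof -
  obtain q where q: "epath X x1 q x2" using conn x by (auto simp: scwol_connected_def)
  let ?v = "Lv x1"
  have p: "epath X' ?v (mp q) ?v" using map_path[OF q] x by simp
  have rt: "(ehrel X' ?v ?v)\<^sup>*\<^sup>* (mp q) []" using sc' p LvV x by (auto simp: scwol_simply_connected_def)
  have "R x1 r x2" if "(ehrel X' ?v ?v)\<^sup>*\<^sup>* (mp q) r" for r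
    using that
  proof (induction rule: rtranclp_induct)
    case base then show ?case using q by (auto simp: R_def)
  next
    case (step r s)
    have "epath X' ?v s ?v" using step.hyps(2) by (simp add: ehrel_def)
    then obtain w where w: "R x1 s w" using lift_ex x by blast
    have "ehstep X' r s \<or> ehstep X' s r" using step.hyps(2) by (simp add: ehrel_def)
    then show ?case
    proof
      assume "ehstep X' r s" then have "x2 = w" using step_end step.IH w by blast
      then show ?case using w by simp
    next
      assume "ehstep X' s r" then have "w = x2" using step_end step.IH w by blast
      then show ?case using w by simp
    qed
  qed
  from this[OF rt] show ?thesis by (auto simp: R_def mp_def)
qed

lemma iso: assumes conn: "scwol_connected X" and sc': "scwol_simply_connected X'"
  shows "scwol_iso X X' Lv Le"
proof -
  have vinj: "inj_on Lv (sVert X)" using Lv_inj[OF conn sc'] by (auto simp: inj_on_def)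
  have vsurj: "Lv ` sVert X = sVert X'"
  proof
    show "Lv ` sVert X \<subseteq> sVert X'" using LvV by auto
    show "sVert X' \<subseteq> Lv ` sVert X"
    proof
      fix v' assume v': "v' \<in> sVert X'"
      obtain x0 where x0: "x0 \<in> sVert X" using conn by (auto simp: scwol_connected_def)
      have "\<forall>v\<in>sVert X'. \<forall>w\<in>sVert X'. \<exists>p. epath X' v p w" using sc' by (simp add: scwol_simply_connected_def scwol_connected_def)
      then obtain p where "epath X' (Lv x0) p v'" using v' LvV[OF x0] by blast
      then obtain w where w: "R x0 p w" "Lv w = v'" using lift_ex x0 by blast
      then have "w \<in> sVert X" by (auto simp: R_def epath_Vend)
      then show "v' \<in> Lv ` sVert X" using w by blast
    qed
  qed
  have einj: "inj_on Le (sEdge X)"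
  proof (rule inj_onI)
    fix e1 e2 assume e: "e1 \<in> sEdge X" "e2 \<in> sEdge X" "Le e1 = Le e2"
    then have "Lv (sIni X e1) = Lv (sIni X e2)" using Le_ini by metis
    then have "sIni X e1 = sIni X e2" using vinj iniV e by (auto simp: inj_on_def)
    then show "e1 = e2" using out_inj e by blast
  qed
  have esurj: "Le ` sEdge X = sEdge X'"
  proof
    show "Le ` sEdge X \<subseteq> sEdge X'" using LeE by auto
    show "sEdge X' \<subseteq> Le ` sEdge X"
    proof
      fix e' assume e': "e' \<in> sEdge X'"
      then have "sIni X' e' \<in> sVert X'" using scX' by (simp add: is_scwol_def)
      then obtain x where x: "x \<in> sVert X" "sIni X' e' = Lv x" using vsurj by auto
      then show "e' \<in> Le ` sEdge X" using out_surj[OF x(1) e' x(2)] by auto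
    qed
  qed
  define gv where "gv = inv_into (sVert X) Lv"
  define ge where "ge = inv_into (sEdge X) Le"
  have gv1: "\<forall>x\<in>sVert X. gv (Lv x) = x" using vinj by (simp add: gv_def)
  have gv2: "\<forall>y\<in>sVert X'. Lv (gv y) = y" using vsurj by (simp add: gv_def f_inv_into_f)
  have gvV: "gv y \<in> sVert X" if "y \<in> sVert X'" for y using vsurj that by (metis gv_def inv_into_into)
  have ge1: "\<forall>x\<in>sEdge X. ge (Le x) = x" using einj by (simp add: ge_def)
  have ge2: "\<forall>y\<in>sEdge X'. Le (ge y) = y" using esurj by (simp add: ge_def f_inv_into_f)
  have geE: "ge y \<in> sEdge X" if "y \<in> sEdge X'" for y using esurj that by (metis ge_def inv_into_into)
  have ge_ini: "sIni X (ge e') = gv (sIni X' e')" if "e' \<in> sEdge X'" for e'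
  proof -
    have "sIni X' e' = Lv (sIni X (ge e'))" using Le_ini[OF geE[OF that]] ge2 that by simp
    then show ?thesis using gv1 iniV[OF geE[OF that]] by simp
  qed
  have ge_ter: "sTer X (ge e') = gv (sTer X' e')" if "e' \<in> sEdge X'" for e'
  proof -
    have "sTer X' e' = Lv (sTer X (ge e'))" using Le_ter[OF geE[OF that]] ge2 that by simp
    then show ?thesis using gv1 terV[OF geE[OF that]] by simp
  qed
  have ge_comp: "ge (sComp X' a b) = sComp X (ge a) (ge b)" if ab: "composable X' a b" for a b
  proof -
    have abE: "a \<in> sEdge X'" "b \<in> sEdge X'" "sIni X' a = sTer X' b" using ab by (auto simp: composable_def)
    have c: "composable X (ge a) (ge b)" using abE geE ge_ini ge_ter by (simp add: composable_def)
    have "Le (sComp X (ge a) (ge b)) = sComp X' a b" using Le_comp[OF c] ge2 abE by simp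
    moreover have "sComp X (ge a) (ge b) \<in> sEdge X" using scX c by (simp add: is_scwol_def)
    ultimately show ?thesis using ge1 by force
  qed
  have "scwol_morph X' X gv ge"
    unfolding scwol_morph_def using gvV geE ge_ini ge_ter ge_comp by blast
  then show ?thesis unfolding scwol_iso_def using mor gv1 gv2 ge1 ge2 by blast
qed

end


context sact begin
lemma map_orbit_path: "epath X x p y \<Longrightarrow> epath Y (orbit G av x) (map (\<lambda>(e, d). (orbit G ae e, d)) p) (orbit G av y)"
proof (induction p arbitrary: x)
  case Nil then show ?case by (auto simp: orbitV_in)
next
  case (Cons a p) then show ?case by (cases a) (auto simp: orbitE_in Yini Yter)
qed

lemma Y_connected: assumes "scwol_connected X" shows "scwol_connected Y"
  unfolding scwol_connected_def
proof (intro conjI ballI)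
  show "sVert Y \<noteq> {}" using assms by (auto simp: scwol_connected_def Y_simps)
  fix A B assume "A \<in> sVert Y" "B \<in> sVert Y"
  then obtain x y where xy: "x \<in> sVert X" "A = orbit G av x" "y \<in> sVert X" "B = orbit G av y" by (auto simp: Y_simps)
  then obtain p where "epath X x p y" using assms by (auto simp: scwol_connected_def)
  then show "\<exists>p. epath Y A p B" using map_orbit_path xy by blast
qed
end

lemma iso_facts: assumes "scwol_iso X X' Lv Le"
  shows "inj_on Lv (sVert X)" "inj_on Le (sEdge X)" "sEdge X' \<subseteq> Le ` sEdge X" "sVert X' \<subseteq> Lv ` sVert X"
proof -
  obtain gv ge where g: "scwol_morph X' X gv ge" "\<forall>x\<in>sVert X. gv (Lv x) = x" "\<forall>y\<in>sVert X'. Lv (gv y) = y"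
    "\<forall>a\<in>sEdge X. ge (Le a) = a" "\<forall>b\<in>sEdge X'. Le (ge b) = b" using assms by (auto simp: scwol_iso_def)
  show "inj_on Lv (sVert X)" using g(2) by (intro inj_onI) (metis)
  show "inj_on Le (sEdge X)" using g(4) by (intro inj_onI) (metis)
  show "sEdge X' \<subseteq> Le ` sEdge X"
  proof
    fix b assume b: "b \<in> sEdge X'"
    then have "ge b \<in> sEdge X" using g(1) by (auto simp: scwol_morph_def)
    then show "b \<in> Le ` sEdge X" using g(5) b by force
  qed
  show "sVert X' \<subseteq> Lv ` sVert X"
  proof
    fix b assume b: "b \<in> sVert X'"
    then have "gv b \<in> sVert X" using g(1) by (auto simp: scwol_morph_def)
    then show "b \<in> Lv ` sVert X" using g(3) b by force
  qed
qed

context mset begin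

abbreviation "COV \<equiv> cog_covering C1.Y C1.Gs C1.psi C1.gab C2.Y C2.Gs C2.psi C2.gab lv led phi lam"

lemma in_transport: assumes x: "x \<in> sVert X" and b: "bij_betw Le (inX x) (inX' (Lv x))"
  and g: "g \<in> carrier G" shows "bij_betw Le (inX (av g x)) (inX' (Lv (av g x)))"
proof -
  have Lg: "\<Lambda> g \<in> carrier G'" "\<Lambda> (inv\<^bsub>G\<^esub> g) = inv\<^bsub>G'\<^esub> \<Lambda> g" using L_in g L_inv by auto
  have Lvg: "Lv (av g x) = av' (\<Lambda> g) (Lv x)" using Lv_eq g x by simp
  show ?thesis unfolding bij_betw_def
  proof
    show "inj_on Le (inX (av g x))"
    proof (rule inj_onI)
      fix e1 e2 assume e1: "e1 \<in> inX (av g x)" and e2: "e2 \<in> inX (av g x)" and eq: "Le e1 = Le e2"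
      have "ae (inv\<^bsub>G\<^esub> g) e1 \<in> inX x" "ae (inv\<^bsub>G\<^esub> g) e2 \<in> inX x"
        using e1 e2 g x by (auto simp: C1.ae_E C1.ae_ter C1.av_inv1)
      moreover have "Le (ae (inv\<^bsub>G\<^esub> g) e1) = Le (ae (inv\<^bsub>G\<^esub> g) e2)" using eq e1 e2 g by (simp add: Le_eq)
      ultimately have "ae (inv\<^bsub>G\<^esub> g) e1 = ae (inv\<^bsub>G\<^esub> g) e2" using b by (auto simp: bij_betw_def dest: inj_onD)
      then show "e1 = e2" using e1 e2 g C1.ae_inj[of "inv\<^bsub>G\<^esub> g" e1 e2] by simp
    qed
    show "Le ` inX (av g x) = inX' (Lv (av g x))"
    proof
      show "Le ` inX (av g x) \<subseteq> inX' (Lv (av g x))" by (auto simp: LeE Le_ter)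
      show "inX' (Lv (av g x)) \<subseteq> Le ` inX (av g x)"
      proof
        fix e' assume e': "e' \<in> inX' (Lv (av g x))"
        let ?f = "ae' (inv\<^bsub>G'\<^esub> \<Lambda> g) e'"
        have "?f \<in> inX' (Lv x)" using e' Lg Lvg x LvV by (auto simp: C2.ae_E C2.ae_ter C2.av_inv1)
        then have "?f \<in> Le ` inX x" using b by (simp add: bij_betw_def)
        then obtain f where f: "f \<in> inX x" "Le f = ?f" by (metis (no_types, lifting) imageE)
        have "Le (ae g f) = e'" using f g Lg e' by (simp add: Le_eq C2.ae_inv2)
        moreover have "ae g f \<in> inX (av g x)" using f g by (simp add: C1.ae_E C1.ae_ter)
        ultimately show "e' \<in> Le ` inX (av g x)" by blast
      qed
    qed
  qed
qed

lemma forward: assumes cov: COV and conn: "scwol_connected X" and sc': "scwol_simply_connected X'"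
  shows "inj_on \<Lambda> (carrier G) \<and> scwol_iso X X' Lv Le"
proof -
  have nd: "scwol_nondeg C1.Y C2.Y lv led" using cov by (simp add: cog_covering_def)
  have outb: "\<forall>x\<in>sVert X. bij_betw Le (outX x) (outX' (Lv x))" using nd nondeg_iff by simp
  have injphi: "\<forall>\<sigma>\<in>sVert C1.Y. inj_on (phi \<sigma>) (carrier (C1.Gs \<sigma>))" using cov by (simp add: cog_covering_def)
  have cb: "bij_betw (\<lambda>e. ae' (k \<sigma>) (Le e)) {e \<in> sEdge X. sTer X e = bar \<sigma> \<and> led (orbit G ae e) = a'}
            {e' \<in> a'. sTer X' e' = bar' (lv \<sigma>)}"
    if "\<sigma> \<in> sVert C1.Y" "a' \<in> sEdge C2.Y" "sTer C2.Y a' = lv \<sigma>" for \<sigma> a'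
    using cov_iff[OF that] cov that by (simp add: cog_covering_def)
  have inbar: "bij_betw Le (inX (bar \<sigma>)) (inX' (Lv (bar \<sigma>)))" if s: "\<sigma> \<in> sVert C1.Y" for \<sigma>
  proof -
    let ?x = "bar \<sigma>"
    have xV: "?x \<in> sVert X" using C1.barV s .
    have so: "\<sigma> = orbit G av ?x" using C1.bar_orbit s .
    have kc: "k \<sigma> \<in> carrier G'" using k_in s .
    have lvs: "lv \<sigma> = orbit G' av' (Lv ?x)" using arg_cong[OF so, of lv] lv_orbit[OF xV] by simp
    have tl: "sTer C2.Y (orbit G' ae' (Le e)) = lv \<sigma>" if "e \<in> inX ?x" for e
      using that lvs LeE by (simp add: C2.Yter Le_ter)
    show ?thesis unfolding bij_betw_def
    proof
      show "inj_on Le (inX ?x)"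
      proof (rule inj_onI)
        fix e1 e2 assume e1: "e1 \<in> inX ?x" and e2: "e2 \<in> inX ?x" and eq: "Le e1 = Le e2"
        let ?a = "orbit G' ae' (Le e1)"
        have a: "?a \<in> sEdge C2.Y" using e1 LeE C2.orbitE_in by simp
        have "e1 \<in> {e \<in> sEdge X. sTer X e = bar \<sigma> \<and> led (orbit G ae e) = ?a}"
             "e2 \<in> {e \<in> sEdge X. sTer X e = bar \<sigma> \<and> led (orbit G ae e) = ?a}"
          using e1 e2 eq led_orbit by auto
        moreover have "inj_on (\<lambda>e. ae' (k \<sigma>) (Le e)) {e \<in> sEdge X. sTer X e = bar \<sigma> \<and> led (orbit G ae e) = ?a}"
          using cb[OF s a tl[OF e1]] by (simp add: bij_betw_def)
        ultimately show "e1 = e2" using eq inj_onD[of "\<lambda>e. ae' (k \<sigma>) (Le e)" _ e1 e2] by simp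
      qed
      show "Le ` inX ?x = inX' (Lv ?x)"
      proof
        show "Le ` inX ?x \<subseteq> inX' (Lv ?x)" by (auto simp: LeE Le_ter)
        show "inX' (Lv ?x) \<subseteq> Le ` inX ?x"
        proof
          fix e' assume e': "e' \<in> inX' (Lv ?x)"
          let ?a = "orbit G' ae' e'"
          have a: "?a \<in> sEdge C2.Y" using e' C2.orbitE_in by simp
          have ta: "sTer C2.Y ?a = lv \<sigma>" using e' lvs by (simp add: C2.Yter)
          have "ae' (k \<sigma>) e' \<in> {e' \<in> ?a. sTer X' e' = bar' (lv \<sigma>)}"
            using e' kc k_bar[OF s] by (auto simp: C2.ae_ter intro: C2.orbit_memI)
          then have "ae' (k \<sigma>) e' \<in> (\<lambda>e. ae' (k \<sigma>) (Le e)) ` {e \<in> sEdge X. sTer X e = bar \<sigma> \<and> led (orbit G ae e) = ?a}"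
            using cb[OF s a ta] by (simp add: bij_betw_def)
          then obtain e where e0: "e \<in> {e \<in> sEdge X. sTer X e = bar \<sigma> \<and> led (orbit G ae e) = ?a}"
            "ae' (k \<sigma>) e' = ae' (k \<sigma>) (Le e)" by (rule imageE)
          then have e: "e \<in> sEdge X" "sTer X e = bar \<sigma>" "ae' (k \<sigma>) (Le e) = ae' (k \<sigma>) e'" by auto
          have "Le e = e'" using e(3) C2.ae_inj kc LeE e(1) e' by blast
          then show "e' \<in> Le ` inX ?x" using e by blast
        qed
      qed
    qed
  qed
  have inb: "\<forall>x\<in>sVert X. bij_betw Le (inX x) (inX' (Lv x))"
  proof
    fix x assume x: "x \<in> sVert X"
    let ?\<sigma> = "orbit G av x"
    have s: "?\<sigma> \<in> sVert C1.Y" using x C1.orbitV_in by simp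
    have "x \<in> orbit G av (bar ?\<sigma>)" using C1.bar_orbit[OF s] x C1.orbitV_self by simp
    then obtain g where g: "g \<in> carrier G" "x = av g (bar ?\<sigma>)" by (rule C1.orbit_memE)
    show "bij_betw Le (inX x) (inX' (Lv x))" using in_transport[OF C1.barV[OF s] inbar[OF s] g(1)] g(2) by simp
  qed
  interpret cv: cov X X' Lv Le
    using C1.scw C2.scw Lmorph outb inb by (unfold_locales) auto
  have iso: "scwol_iso X X' Lv Le" using cv.iso conn sc' by blast
  have Lvinj: "inj_on Lv (sVert X)" using iso_facts(1)[OF iso] .
  have "inj_on \<Lambda> (carrier G)"
  proof (rule inj_onI)
    fix g1 g2 assume g: "g1 \<in> carrier G" "g2 \<in> carrier G" "\<Lambda> g1 = \<Lambda> g2"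
    let ?u = "inv\<^bsub>G\<^esub> g1 \<otimes>\<^bsub>G\<^esub> g2"
    have uc: "?u \<in> carrier G" using g by simp
    have Lu: "\<Lambda> ?u = \<one>\<^bsub>G'\<^esub>" using g L_mult L_inv L_in by simp
    obtain x0 where x0: "x0 \<in> sVert X" using conn by (auto simp: scwol_connected_def)
    let ?\<sigma> = "orbit G av x0"
    have s: "?\<sigma> \<in> sVert C1.Y" using x0 C1.orbitV_in by simp
    have bV: "bar ?\<sigma> \<in> sVert X" using C1.barV s .
    have "Lv (av ?u (bar ?\<sigma>)) = Lv (bar ?\<sigma>)" using Lv_eq[OF uc bV] Lu LvV[OF bV] C2.av_one by simp
    then have "av ?u (bar ?\<sigma>) = bar ?\<sigma>" using Lvinj bV C1.av_V[OF uc bV] by (auto dest: inj_onD)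
    then have us: "?u \<in> carrier (C1.Gs ?\<sigma>)" using uc by (simp add: C1.Gs_carrier stab_def)
    have os: "\<one>\<^bsub>G\<^esub> \<in> carrier (C1.Gs ?\<sigma>)" using stab_def C1.av_one bV by (simp add: C1.Gs_carrier stab_def)
    have "phi ?\<sigma> ?u = phi ?\<sigma> \<one>\<^bsub>G\<^esub>" using Lu L_one k_in[OF s] by (simp add: induced_cog_v_def)
    then have "?u = \<one>\<^bsub>G\<^esub>" using injphi s us os by (auto dest: inj_onD)
    moreover have "g2 = g1 \<otimes>\<^bsub>G\<^esub> ?u" using g by (simp add: C1.cancel1)
    ultimately show "g1 = g2" using g by simp
  qed
  then show ?thesis using iso by simp
qed

end


context mset begin

lemma backward: assumes inj: "inj_on \<Lambda> (carrier G)" and iso: "scwol_iso X X' Lv Le"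
  and conn': "scwol_connected X'"
  shows COV
proof -
  have Lvinj: "inj_on Lv (sVert X)" and Leinj: "inj_on Le (sEdge X)" and Lesurj: "sEdge X' \<subseteq> Le ` sEdge X"
    using iso_facts[OF iso] by auto
  have nd: "scwol_nondeg C1.Y C2.Y lv led"
    unfolding nondeg_iff
  proof
    fix x assume x: "x \<in> sVert X"
    show "bij_betw Le (outX x) (outX' (Lv x))" unfolding bij_betw_def
    proof
      show "inj_on Le (outX x)" using Leinj by (rule inj_on_subset) auto
      show "Le ` outX x = outX' (Lv x)"
      proof
        show "Le ` outX x \<subseteq> outX' (Lv x)" by (auto simp: LeE Le_ini)
        show "outX' (Lv x) \<subseteq> Le ` outX x"
        proof
          fix e' assume e': "e' \<in> outX' (Lv x)"
          then obtain e where e: "e \<in> sEdge X" "e' = Le e" using Lesurj by auto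
          have "Lv (sIni X e) = Lv x" using e e' Le_ini by simp
          then have "sIni X e = x" using Lvinj C1.iniV e x by (auto dest: inj_onD)
          then show "e' \<in> Le ` outX x" using e by auto
        qed
      qed
    qed
  qed
  have injphi: "inj_on (phi \<sigma>) (carrier (C1.Gs \<sigma>))" if s: "\<sigma> \<in> sVert C1.Y" for \<sigma>
  proof (rule inj_onI)
    fix g1 g2 assume g: "g1 \<in> carrier (C1.Gs \<sigma>)" "g2 \<in> carrier (C1.Gs \<sigma>)" "phi \<sigma> g1 = phi \<sigma> g2"
    then have gc: "g1 \<in> carrier G" "g2 \<in> carrier G" by (auto simp: C1.Gs_carrier stab_def)
    then have "\<Lambda> g1 = \<Lambda> g2" using g(3) k_in[OF s] L_in by (simp add: induced_cog_v_def C2.G.m_assoc)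
    then show "g1 = g2" using inj gc by (auto dest: inj_onD)
  qed
  have cb: "bij_betw (\<lambda>e. ae' (k \<sigma>) (Le e)) {e \<in> sEdge X. sTer X e = bar \<sigma> \<and> led (orbit G ae e) = a'}
            {e' \<in> a'. sTer X' e' = bar' (lv \<sigma>)}"
    if s: "\<sigma> \<in> sVert C1.Y" and a: "a' \<in> sEdge C2.Y" "sTer C2.Y a' = lv \<sigma>" for \<sigma> a'
    unfolding bij_betw_def
  proof
    have kc: "k \<sigma> \<in> carrier G'" using k_in s .
    show "inj_on (\<lambda>e. ae' (k \<sigma>) (Le e)) {e \<in> sEdge X. sTer X e = bar \<sigma> \<and> led (orbit G ae e) = a'}"
    proof (rule inj_onI)
      fix e1 e2 assume e: "e1 \<in> {e \<in> sEdge X. sTer X e = bar \<sigma> \<and> led (orbit G ae e) = a'}"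
        "e2 \<in> {e \<in> sEdge X. sTer X e = bar \<sigma> \<and> led (orbit G ae e) = a'}"
        "ae' (k \<sigma>) (Le e1) = ae' (k \<sigma>) (Le e2)"
      then have "Le e1 = Le e2" using C2.ae_inj kc LeE by simp
      then show "e1 = e2" using Leinj e by (auto dest: inj_onD)
    qed
    show "(\<lambda>e. ae' (k \<sigma>) (Le e)) ` {e \<in> sEdge X. sTer X e = bar \<sigma> \<and> led (orbit G ae e) = a'} =
          {e' \<in> a'. sTer X' e' = bar' (lv \<sigma>)}"
    proof
      show "(\<lambda>e. ae' (k \<sigma>) (Le e)) ` {e \<in> sEdge X. sTer X e = bar \<sigma> \<and> led (orbit G ae e) = a'} \<subseteq>
          {e' \<in> a'. sTer X' e' = bar' (lv \<sigma>)}"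
      proof
        fix z assume "z \<in> (\<lambda>e. ae' (k \<sigma>) (Le e)) ` {e \<in> sEdge X. sTer X e = bar \<sigma> \<and> led (orbit G ae e) = a'}"
        then obtain e where e: "e \<in> sEdge X" "sTer X e = bar \<sigma>" "led (orbit G ae e) = a'" "z = ae' (k \<sigma>) (Le e)" by blast
        have "z \<in> orbit G' ae' (Le e)" using e(4) kc by (rule C2.orbit_memI[rotated])
        then have "z \<in> a'" using e(1,3) led_orbit by auto
        moreover have "sTer X' z = bar' (lv \<sigma>)" using e kc k_bar[OF s] LeE by (simp add: C2.ae_ter Le_ter)
        ultimately show "z \<in> {e' \<in> a'. sTer X' e' = bar' (lv \<sigma>)}" by simp
      qed
      show "{e' \<in> a'. sTer X' e' = bar' (lv \<sigma>)} \<subseteq>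
            (\<lambda>e. ae' (k \<sigma>) (Le e)) ` {e \<in> sEdge X. sTer X e = bar \<sigma> \<and> led (orbit G ae e) = a'}"
      proof
        fix z assume z: "z \<in> {e' \<in> a'. sTer X' e' = bar' (lv \<sigma>)}"
        have zE: "z \<in> sEdge X'" using z C2.YE_sub a by blast
        let ?e' = "ae' (inv\<^bsub>G'\<^esub> k \<sigma>) z"
        have e'E: "?e' \<in> sEdge X'" using zE kc by (simp add: C2.ae_E)
        then obtain e where e: "e \<in> sEdge X" "?e' = Le e" using Lesurj by auto
        have bV: "bar \<sigma> \<in> sVert X" using C1.barV s .
        have "Lv (sTer X e) = sTer X' ?e'" using e Le_ter by simp
        also have "\<dots> = av' (inv\<^bsub>G'\<^esub> k \<sigma>) (bar' (lv \<sigma>))" using z zE kc by (simp add: C2.ae_ter)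
        also have "\<dots> = Lv (bar \<sigma>)" using k_bar[OF s, symmetric] kc LvV[OF bV] by (simp add: C2.av_inv1)
        finally have te: "sTer X e = bar \<sigma>" using Lvinj C1.terV e(1) bV by (auto dest: inj_onD)
        have "?e' \<in> orbit G' ae' z" using kc by (intro C2.orbit_memI) auto
        then have "orbit G' ae' ?e' = orbit G' ae' z" using C2.orbitE_eq zE by blast
        also have "\<dots> = a'" using C2.YE_orbit a(1) z by simp
        finally have "led (orbit G ae e) = a'" using led_orbit e by simp
        moreover have "z = ae' (k \<sigma>) (Le e)" using e(2)[symmetric] C2.ae_inv2[OF kc zE] by simp
        ultimately show "z \<in> (\<lambda>e. ae' (k \<sigma>) (Le e)) ` {e \<in> sEdge X. sTer X e = bar \<sigma> \<and> led (orbit G ae e) = a'}"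
          using e te by blast
      qed
    qed
  qed
  show COV
    unfolding cog_covering_def
  proof (intro conjI ballI impI)
    show "cog_morph C1.Y C1.Gs C1.psi C1.gab C2.Y C2.Gs C2.psi C2.gab lv led phi lam" by (rule cogm)
    show "scwol_nondeg C1.Y C2.Y lv led" by (rule nd)
    show "scwol_connected C2.Y" using C2.Y_connected conn' .
    show "inj_on (phi \<sigma>) (carrier (C1.Gs \<sigma>))" if "\<sigma> \<in> sVert C1.Y" for \<sigma> using injphi that .
    fix a' \<sigma> assume "a' \<in> sEdge C2.Y" "\<sigma> \<in> sVert C1.Y" "sTer C2.Y a' = lv \<sigma>"
    then show "bij_betw (\<lambda>(a, C). (phi \<sigma> ` C) <#>\<^bsub>C2.Gs (lv \<sigma>)\<^esub> {lam a}
                     <#>\<^bsub>C2.Gs (lv \<sigma>)\<^esub> (C2.psi a' ` carrier (C2.Gs (sIni C2.Y a'))))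
          {(a, C). a \<in> sEdge C1.Y \<and> led a = a' \<and> sTer C1.Y a = \<sigma> \<and>
                   C \<in> lcosets\<^bsub>C1.Gs \<sigma>\<^esub> (C1.psi a ` carrier (C1.Gs (sIni C1.Y a)))}
          (lcosets\<^bsub>C2.Gs (lv \<sigma>)\<^esub> (C2.psi a' ` carrier (C2.Gs (sIni C2.Y a'))))"
      using cov_iff cb by blast
  qed
qed

end

theorem mainTheorem9:
  fixes G :: "'g monoid" and X :: "('v, 'e) scwol"
    and av :: "'g \<Rightarrow> 'v \<Rightarrow> 'v" and ae :: "'g \<Rightarrow> 'e \<Rightarrow> 'e"
    and G' :: "'h monoid" and X' :: "('w, 'f) scwol"
    and av' :: "'h \<Rightarrow> 'w \<Rightarrow> 'w" and ae' :: "'h \<Rightarrow> 'f \<Rightarrow> 'f"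
    and \<Lambda> :: "'g \<Rightarrow> 'h" and Lv :: "'v \<Rightarrow> 'w" and Le :: "'e \<Rightarrow> 'f"
    and bar :: "'v set \<Rightarrow> 'v" and h :: "'e set \<Rightarrow> 'g"
    and bar' :: "'w set \<Rightarrow> 'w" and h' :: "'f set \<Rightarrow> 'h"
    and k :: "'v set \<Rightarrow> 'h"
  defines "Y \<equiv> quotient_scwol G X av ae"
    and "Y' \<equiv> quotient_scwol G' X' av' ae'"
    and "lv \<equiv> induced_map G' av' Lv"
    and "led \<equiv> induced_map G' ae' Le"
  assumes act: "scwol_action G X av ae"
    and act': "scwol_action G' X' av' ae'"
    and sc: "scwol_simply_connected X"
    and sc': "scwol_simply_connected X'"
    and equiv: "equivariant_morph G X av ae G' X' av' ae' \<Lambda> Lv Le"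
    and C: "valid_choice G X av ae bar h"
    and C': "valid_choice G' X' av' ae' bar' h'"
    and N: "\<forall>\<sigma>\<in>sVert Y. k \<sigma> \<in> carrier G' \<and> av' (k \<sigma>) (Lv (bar \<sigma>)) = bar' (lv \<sigma>)"
  shows "cog_covering
           Y (assoc_groups G av bar) (assoc_psi G h) (assoc_twist G X av ae h)
           Y' (assoc_groups G' av' bar') (assoc_psi G' h') (assoc_twist G' X' av' ae' h')
           lv led (induced_cog_v G' \<Lambda> k) (induced_cog_e G' X \<Lambda> h h' led k)
         \<longleftrightarrow> inj_on \<Lambda> (carrier G) \<and> scwol_iso X X' Lv Le"
proof -
  interpret M: mset G X av ae bar h G' X' av' ae' bar' h' \<Lambda> Lv Le k
  proof (unfold_locales)
    show "scwol_action G X av ae" by (rule act)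
    show "valid_choice G X av ae bar h" by (rule C)
    show "scwol_action G' X' av' ae'" by (rule act')
    show "valid_choice G' X' av' ae' bar' h'" by (rule C')
    show "equivariant_morph G X av ae G' X' av' ae' \<Lambda> Lv Le" by (rule equiv)
    show "\<forall>\<sigma>\<in>sVert (quotient_scwol G X av ae). k \<sigma> \<in> carrier G' \<and> av' (k \<sigma>) (Lv (bar \<sigma>)) = bar' (induced_map G' av' Lv \<sigma>)"
      using N unfolding assms(1,3) .
  qed
  have conn: "scwol_connected X" using sc by (simp add: scwol_simply_connected_def)
  have conn': "scwol_connected X'" using sc' by (simp add: scwol_simply_connected_def)
  show ?thesis unfolding assms(1-4)
    using M.forward[OF _ conn sc'] M.backward[OF _ _ conn'] by blast
qed


end
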